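(* In the line network model (see context), assume a unique worst link: there is $m$ with $p_m=\max_i p_i<1$ and $p_i<p_m$ for $i\ne m$, and let $A:=1-p_m$. Then $\mathbb{E}R_t=A\,t-r(t)$ where the function $r$ is bounded uniformly in $t\ge0$ and $n\ge1$, and consequently $\mathbb{E}T_n=\frac{n}{A}+O(1)$ as $n\to\infty$.
   Context: Line network model. Fix integers $\ell\ge1$, $n\ge1$ and erasure probabilities $p_1,\dots,p_\ell\in[0,1)$. Let $\{z_{t,i}\}$ be independent Bernoulli variables with $\mathbb{P}(z_{t,i}=1)=1-p_i$. The rank $\rho_i(t)$ of node $N^{(i)}$ after $t$ steps satisfies $\rho_1(t)=n$, $\rho_i(0)=0$ for $i\ge2$, and $\rho_{i+1}(t)=\rho_{i+1}(t-1)+z_{t,i}\mathbf 1\{\rho_i(t-1)>\rho_{i+1}(t-1)\}$. $R_t:=\rho_{\ell+1}(t)$ and $T_n:=\min\{t:\rho_{\ell+1}(t)=n\}$. Here the bound on $r(t)$ is meant in the regime before the source packets are exhausted, i.e. with the source treated as having an unlimited supply of packets (as $n\to\infty$). *)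

theory Defs
  imports "HOL-Probability.Probability"
begin

text \<open>Link i (1 \<le> i \<le> l) goes from node N^(i) to node N^(i+1).
  rk s z t i is the rank rho_(i+1)(t) of node N^(i+1) after t steps, where the
  source N^(1) has rank s (an extended natural; s = \<infinity> models an unlimited
  supply of source packets) and z t i is the success indicator z_(t,i).\<close>

fun rk :: "enat \<Rightarrow> (nat \<Rightarrow> nat \<Rightarrow> bool) \<Rightarrow> nat \<Rightarrow> nat \<Rightarrow> nat" where
  "rk s z 0 i = 0"
| "rk s z (Suc t) i =
     rk s z t i +
     (if z (Suc t) i \<and>
         (if i \<le> 1 then s else enat (rk s z t (i - 1))) > enat (rk s z t i)
      then 1 else 0)"

definition erasure_space :: "(nat \<Rightarrow> real) \<Rightarrow> (nat \<times> nat \<Rightarrow> bool) measure" where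
  "erasure_space p = (\<Pi>\<^sub>M ti\<in>UNIV. measure_pmf (bernoulli_pmf (1 - p (snd ti))))"

definition R :: "nat \<Rightarrow> enat \<Rightarrow> nat \<Rightarrow> (nat \<times> nat \<Rightarrow> bool) \<Rightarrow> nat" where
  "R l s t \<omega> = rk s (curry \<omega>) t l"

definition T :: "nat \<Rightarrow> nat \<Rightarrow> (nat \<times> nat \<Rightarrow> bool) \<Rightarrow> ennreal" where
  "T l n \<omega> = (if \<exists>t. R l (enat n) t \<omega> = n
               then ennreal (real (LEAST t. R l (enat n) t \<omega> = n)) else \<infinity>)"

end

theory Submission
  imports Defs
begin


definition Mb :: "(nat \<Rightarrow> real) \<Rightarrow> nat \<times> nat \<Rightarrow> bool measure" where
  "Mb p = (\<lambda>ti. measure_pmf (bernoulli_pmf (1 - p (snd ti))))"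

lemma erasure_space_Mb: "erasure_space p = PiM UNIV (Mb p)"
  by (simp add: erasure_space_def Mb_def)

lemma prob_space_Mb: "prob_space (Mb p i)"
  by (simp add: Mb_def measure_pmf.prob_space_axioms)

lemma sets_Mb[simp]: "sets (Mb p i) = UNIV" and space_Mb[simp]: "space (Mb p i) = UNIV"
  by (simp_all add: Mb_def)

lemma prob_space_E: "prob_space (erasure_space p)"
  unfolding erasure_space_Mb by (intro prob_space_PiM prob_space_Mb)

lemma space_E[simp]: "space (erasure_space p) = UNIV"
  unfolding erasure_space_Mb by (simp add: space_PiM)

definition dep :: "(nat \<times> nat) set \<Rightarrow> ((nat \<times> nat \<Rightarrow> bool) \<Rightarrow> 'b) \<Rightarrow> bool" where
  "dep J F \<longleftrightarrow> (\<forall>\<omega> \<omega>'. (\<forall>x\<in>J. \<omega> x = \<omega>' x) \<longrightarrow> F \<omega> = F \<omega>')"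

lemma finite_PiM_all_measurable:
  assumes "finite J"
  shows "f \<in> borel_measurable (PiM J (Mb p))"
proof -
  have fin: "finite (space (PiM J (Mb p)))"
    using assms by (simp add: space_PiM finite_PiE)
  have sing: "{r} \<in> sets (PiM J (Mb p))" if "r \<in> space (PiM J (Mb p))" for r
  proof -
    have ext: "r \<in> extensional J" using that by (simp add: space_PiM PiE_def)
    have "{r} = PiE J (\<lambda>i. {r i})"
    proof (intro equalityI subsetI)
      fix x assume x: "x \<in> PiE J (\<lambda>i. {r i})"
      have "x i = r i" for i
      proof (cases "i \<in> J")
        case True then show ?thesis using PiE_mem[OF x True] by simp
      next
        case False
        have "x \<in> extensional J" using x by (simp add: PiE_iff)
        then have "x i = undefined" using False by (rule extensional_arb)
        moreover have "r i = undefined" using ext False by (rule extensional_arb)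
        ultimately show ?thesis by simp
      qed
      then show "x \<in> {r}" by (simp add: fun_eq_iff)
    next
      fix x assume "x \<in> {r}"
      then show "x \<in> PiE J (\<lambda>i. {r i})" using ext by (simp add: PiE_def Pi_def)
    qed
    also have "\<dots> \<in> sets (PiM J (Mb p))"
      using assms by (intro sets_PiM_I_finite) auto
    finally show ?thesis .
  qed
  have all: "S \<in> sets (PiM J (Mb p))" if "S \<subseteq> space (PiM J (Mb p))" for S
  proof -
    have eq: "(\<Union>r\<in>S. {r}) = S" by blast
    have "finite S" using fin that by (rule rev_finite_subset)
    then have "(\<Union>r\<in>S. {r}) \<in> sets (PiM J (Mb p))"
      by (rule sets.finite_UN) (use that sing in blast)
    then show ?thesis unfolding eq .
  qed
  show ?thesis
  proof (rule measurableI)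
    fix A show "f -` A \<inter> space (PiM J (Mb p)) \<in> sets (PiM J (Mb p))"
      by (rule all) blast
  qed simp
qed

definition ext :: "(nat \<times> nat) set \<Rightarrow> (nat \<times> nat \<Rightarrow> bool) \<Rightarrow> (nat \<times> nat \<Rightarrow> bool)" where
  "ext J r = (\<lambda>i. if i \<in> J then r i else False)"

lemma dep_restrict: "dep J F \<Longrightarrow> F (ext J (restrict \<omega> J)) = F \<omega>"
  unfolding dep_def by (erule allE[of _ "ext J (restrict \<omega> J)"], erule allE[of _ \<omega>]) (simp add: ext_def)

lemma dep_measurable:
  assumes "finite J" "dep J F"
  shows "(F :: _ \<Rightarrow> real) \<in> borel_measurable (erasure_space p)"
proof -
  have "(\<lambda>\<omega>. (F \<circ> ext J) (restrict \<omega> J)) \<in> borel_measurable (erasure_space p)"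
    unfolding erasure_space_Mb
    by (rule measurable_compose[OF measurable_restrict_subset finite_PiM_all_measurable]) (use assms in auto)
  then show ?thesis using dep_restrict[OF assms(2)] by simp
qed

lemma dep_bounded:
  assumes "finite J" "dep J F"
  shows "\<exists>B. \<forall>\<omega>. norm (F \<omega> :: real) \<le> B"
proof -
  have fin: "finite (PiE J (\<lambda>_. UNIV :: bool set))" using assms by (simp add: finite_PiE)
  let ?B = "Max ((\<lambda>r. norm (F (ext J r))) ` PiE J (\<lambda>_. UNIV))"
  have "norm (F \<omega>) \<le> ?B" for \<omega>
  proof -
    have "restrict \<omega> J \<in> PiE J (\<lambda>_. UNIV)" by auto
    then have "norm (F (ext J (restrict \<omega> J))) \<le> ?B" using fin by (intro Max_ge) auto
    then show ?thesis using dep_restrict[OF assms(2)] by simp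
  qed
  then show ?thesis by blast
qed

lemma dep_integrable:
  assumes "finite J" "dep J F"
  shows "integrable (erasure_space p) (F :: _ \<Rightarrow> real)"
proof -
  interpret prob_space "erasure_space p" by (rule prob_space_E)
  obtain B where "\<forall>\<omega>. norm (F \<omega>) \<le> B" using dep_bounded[OF assms] by blast
  then show ?thesis
    by (intro integrable_const_bound[where B=B] dep_measurable[OF assms]) auto
qed

lemma indep_coords:
  "prob_space.indep_vars (erasure_space p) (Mb p) (\<lambda>i \<omega>. \<omega> i) UNIV"
proof -
  interpret prob_space "erasure_space p" by (rule prob_space_E)
  show ?thesis
  proof (subst indep_vars_iff_distr_eq_PiM)
    show "random_variable (Mb p i) (\<lambda>\<omega>. \<omega> i)" for i
      unfolding erasure_space_Mb by (rule measurable_component_singleton) auto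
    have h1: "(\<lambda>x. \<lambda>i\<in>UNIV. x i) = (\<lambda>x. x)" by (simp add: restrict_def)
    have h2: "PiM UNIV (\<lambda>i. distr (PiM UNIV (Mb p)) (Mb p i) (\<lambda>x. x i)) = PiM UNIV (Mb p)"
      by (intro PiM_cong refl distr_PiM_component prob_space_Mb) auto
    show "distr (erasure_space p) (Pi\<^sub>M UNIV (Mb p)) (\<lambda>x. \<lambda>i\<in>UNIV. x i) =
      Pi\<^sub>M UNIV (\<lambda>i. distr (erasure_space p) (Mb p i) (\<lambda>x. x i))"
      unfolding erasure_space_Mb h1 h2 by (rule distr_id)
  qed simp
qed

lemma one_step:
  assumes "finite J" "dep J F" "a \<notin> J"
  shows "(\<integral>\<omega>. F \<omega> * g (\<omega> a) \<partial>erasure_space p) =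
         (\<integral>\<omega>. F \<omega> \<partial>erasure_space p) * (\<integral>\<omega>. (g (\<omega> a) :: real) \<partial>erasure_space p)"
proof -
  interpret prob_space "erasure_space p" by (rule prob_space_E)
  have iv: "indep_var (PiM J (Mb p)) (\<lambda>\<omega>. restrict (\<lambda>i. \<omega> i) J) (PiM {a} (Mb p)) (\<lambda>\<omega>. restrict (\<lambda>i. \<omega> i) {a})"
    using assms(3) by (intro indep_var_restrict[OF indep_coords]) auto
  have iv2: "indep_var borel ((F \<circ> ext J) \<circ> (\<lambda>\<omega>. restrict (\<lambda>i. \<omega> i) J))
                       borel ((\<lambda>r. g (r a)) \<circ> (\<lambda>\<omega>. restrict (\<lambda>i. \<omega> i) {a}))"
    by (intro indep_var_compose[OF iv] finite_PiM_all_measurable assms(1)) simp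
  have e1: "((F \<circ> ext J) \<circ> (\<lambda>\<omega>. restrict (\<lambda>i. \<omega> i) J)) = F"
    using dep_restrict[OF assms(2)] by (auto simp: fun_eq_iff)
  have e2: "((\<lambda>r. g (r a)) \<circ> (\<lambda>\<omega>. restrict (\<lambda>i. \<omega> i) {a})) = (\<lambda>\<omega>. g (\<omega> a))"
    by (auto simp: fun_eq_iff)
  have dg: "dep {a} (\<lambda>\<omega>. g (\<omega> a))" by (simp add: dep_def)
  show ?thesis
    using indep_var_lebesgue_integral[OF iv2[unfolded e1 e2] dep_integrable[OF assms(1,2)] dep_integrable[OF _ dg]]
    by simp
qed

lemma coord_expect:
  assumes "0 \<le> p (snd a)" "p (snd a) \<le> 1"
  shows "(\<integral>\<omega>. (g (\<omega> a) :: real) \<partial>erasure_space p) = g True * (1 - p (snd a)) + g False * p (snd a)"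
proof -
  have "(\<integral>\<omega>. g (\<omega> a) \<partial>erasure_space p) = (\<integral>x. g x \<partial>distr (erasure_space p) (Mb p a) (\<lambda>\<omega>. \<omega> a))"
    unfolding erasure_space_Mb
    apply (rule integral_distr[symmetric])
     apply (rule measurable_component_singleton, simp)
    apply (simp add: measurable_def)
    done
  also have "distr (erasure_space p) (Mb p a) (\<lambda>\<omega>. \<omega> a) = Mb p a"
    unfolding erasure_space_Mb by (intro distr_PiM_component prob_space_Mb) auto
  finally show ?thesis using assms by (simp add: Mb_def)
qed



lemma rk_local:
  "(\<forall>s j. s \<le> t \<longrightarrow> j \<le> i \<longrightarrow> z s j = z' s j) \<Longrightarrow> rk s0 z t i = rk s0 z' t i"
proof (induction t arbitrary: i)
  case 0 then show ?case by simp
next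
  case (Suc t)
  have a: "rk s0 z t i = rk s0 z' t i" using Suc.prems by (intro Suc.IH) auto
  have b: "rk s0 z t (i - 1) = rk s0 z' t (i - 1)" using Suc.prems by (intro Suc.IH) auto
  have c: "z (Suc t) i = z' (Suc t) i" using Suc.prems by auto
  show ?case by (simp only: rk.simps a b c)
qed

lemma rk_line_mono: "2 \<le> i \<Longrightarrow> rk s z t i \<le> rk s z t (i - 1)"
proof (induction t)
  case 0 then show ?case by simp
next
  case (Suc t)
  then show ?case by auto
qed

lemma rk_line_mono': assumes "1 \<le> i" "i \<le> j" shows "rk s z t j \<le> rk s z t i"
  using assms(2)
proof (induction j rule: dec_induct)
  case base then show ?case by simp
next
  case (step j)
  have "rk s z t (Suc j) \<le> rk s z t (Suc j - 1)" using step assms by (intro rk_line_mono) auto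
  then show ?case using step by simp
qed

lemma rk_time_mono: "t \<le> t' \<Longrightarrow> rk s z t i \<le> rk s z t' i"
proof (induction t' rule: dec_induct)
  case base then show ?case by simp
next
  case (step t') then show ?case by simp
qed

lemma rk_Suc_le: "rk s z (Suc t) i \<le> Suc (rk s z t i)"
  by simp

fun zc :: "nat \<Rightarrow> (nat \<times> nat \<Rightarrow> bool) \<Rightarrow> nat \<Rightarrow> nat" where
  "zc m \<omega> 0 = 0"
| "zc m \<omega> (Suc t) = zc m \<omega> t + (if \<omega> (Suc t, m) then 1 else 0)"

lemma rk_le_zc: "rk s (curry \<omega>) t m \<le> zc m \<omega> t"
  by (induction t) auto

lemma zc_local: "(\<forall>s. s \<le> t \<longrightarrow> \<omega> (s, m) = \<omega>' (s, m)) \<Longrightarrow> zc m \<omega> t = zc m \<omega>' t"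
  by (induction t) auto

lemma zc_mono: "t \<le> t' \<Longrightarrow> zc m \<omega> t \<le> zc m \<omega> t'"
  by (induction t' rule: dec_induct) auto

lemma zc_le: "zc m \<omega> t \<le> t"
  by (induction t) auto

lemma rk_min: "rk (enat n) z t i = min n (rk \<infinity> z t i)"
proof (induction t arbitrary: i)
  case 0 then show ?case by simp
next
  case (Suc t)
  show ?case
  proof (cases "i \<le> 1")
    case True
    then show ?thesis using Suc.IH[of i] by (auto simp: min_def)
  next
    case False
    have inv: "rk \<infinity> z t i \<le> rk \<infinity> z t (i - 1)" using False by (intro rk_line_mono) auto
    then show ?thesis using False Suc.IH[of i] Suc.IH[of "i - 1"] by (auto simp: min_def)
  qed
qed

definition Jt :: "nat \<Rightarrow> nat \<Rightarrow> (nat \<times> nat) set" where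
  "Jt l t = {..t} \<times> {..l}"

lemma finite_Jt[simp]: "finite (Jt l t)"
  by (simp add: Jt_def)

lemma Jt_mono: "t \<le> t' \<Longrightarrow> Jt l t \<subseteq> Jt l t'"
  by (auto simp: Jt_def)

lemma notin_Jt[simp]: "(Suc t, k) \<notin> Jt l t"
  by (simp add: Jt_def)

lemma in_Jt[simp]: "(a, k) \<in> Jt l t \<longleftrightarrow> a \<le> t \<and> k \<le> l"
  by (simp add: Jt_def)

lemma agree_rk: "(\<forall>x\<in>Jt l t. \<omega> x = \<omega>' x) \<Longrightarrow> k \<le> l \<Longrightarrow>
   rk s (curry \<omega>) t k = rk s (curry \<omega>') t k"
  by (intro rk_local) (auto simp: Jt_def)

lemma agree_zc: "(\<forall>x\<in>Jt l t. \<omega> x = \<omega>' x) \<Longrightarrow> m \<le> l \<Longrightarrow> zc m \<omega> t = zc m \<omega>' t"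
  by (intro zc_local) (auto simp: Jt_def)

lemma dep_mono: "dep J F \<Longrightarrow> J \<subseteq> J' \<Longrightarrow> dep J' F"
  unfolding dep_def by blast

lemma one_step2:
  assumes "finite J" "dep J F" "a \<notin> J" "b \<notin> J" "a \<noteq> b"
  shows "(\<integral>\<omega>. F \<omega> * ga (\<omega> a) * gb (\<omega> b) \<partial>erasure_space p) =
         (\<integral>\<omega>. F \<omega> \<partial>erasure_space p) * (\<integral>\<omega>. (ga (\<omega> a) :: real) \<partial>erasure_space p)
          * (\<integral>\<omega>. (gb (\<omega> b) :: real) \<partial>erasure_space p)"
proof -
  have d: "dep (insert a J) (\<lambda>\<omega>. F \<omega> * ga (\<omega> a))"
    using assms(2) unfolding dep_def by auto
  have 1: "(\<integral>\<omega>. F \<omega> * ga (\<omega> a) * gb (\<omega> b) \<partial>erasure_space p) =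
     (\<integral>\<omega>. F \<omega> * ga (\<omega> a) \<partial>erasure_space p) * (\<integral>\<omega>. (gb (\<omega> b) :: real) \<partial>erasure_space p)"
    by (rule one_step[OF _ d]) (use assms in auto)
  have 2: "(\<integral>\<omega>. F \<omega> * ga (\<omega> a) \<partial>erasure_space p) =
     (\<integral>\<omega>. F \<omega> \<partial>erasure_space p) * (\<integral>\<omega>. (ga (\<omega> a) :: real) \<partial>erasure_space p)"
    by (rule one_step[OF assms(1,2,3)])
  show ?thesis by (simp only: 1 2)
qed



lemma dep_mult: "dep J f \<Longrightarrow> dep J g \<Longrightarrow> dep J (\<lambda>\<omega>. (f \<omega> :: real) * g \<omega>)"
  unfolding dep_def by metis

lemma dep_add: "dep J f \<Longrightarrow> dep J g \<Longrightarrow> dep J (\<lambda>\<omega>. (f \<omega> :: real) + g \<omega>)"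
  unfolding dep_def by metis

lemma dep_coord: "a \<in> J \<Longrightarrow> dep J (\<lambda>\<omega>. g (\<omega> a))"
  unfolding dep_def by auto

lemma dep_const: "dep J (\<lambda>\<omega>. c)"
  unfolding dep_def by auto

lemma dep_zc: "m \<le> l \<Longrightarrow> dep (Jt l t) (\<lambda>\<omega>. f (zc m \<omega> t))"
  unfolding dep_def using agree_zc by metis

lemma dep_rk:
  assumes "k \<le> l" "m \<le> l"
  shows "dep (Jt l t) (\<lambda>\<omega>. f (zc m \<omega> t) (rk s (curry \<omega>) t k))"
  unfolding dep_def
proof (intro allI impI)
  fix \<omega> \<omega>' :: "nat \<times> nat \<Rightarrow> bool"
  assume a: "\<forall>x\<in>Jt l t. \<omega> x = \<omega>' x"
  show "f (zc m \<omega> t) (rk s (curry \<omega>) t k) = f (zc m \<omega>' t) (rk s (curry \<omega>') t k)"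
    using agree_zc[OF a assms(2)] agree_rk[OF a assms(1)] by simp
qed

lemma dep_gen:
  assumes "dep J f" "dep J g" "a \<in> J" "b \<in> J"
  shows "dep J (\<lambda>\<omega>. H (\<omega> a) (\<omega> b) (f \<omega>) (g \<omega>))"
  unfolding dep_def
proof (intro allI impI)
  fix \<omega> \<omega>' :: "nat \<times> nat \<Rightarrow> bool"
  assume h: "\<forall>x\<in>J. \<omega> x = \<omega>' x"
  have "f \<omega> = f \<omega>'" by (rule assms(1)[unfolded dep_def, rule_format]) (use h in auto)
  moreover have "g \<omega> = g \<omega>'" by (rule assms(2)[unfolded dep_def, rule_format]) (use h in auto)
  moreover have "\<omega> a = \<omega>' a" "\<omega> b = \<omega>' b" using h assms(3,4) by auto
  ultimately show "H (\<omega> a) (\<omega> b) (f \<omega>) (g \<omega>) = H (\<omega>' a) (\<omega>' b) (f \<omega>') (g \<omega>')" by simp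
qed

lemma dep_Suc: "dep (Jt l t) f \<Longrightarrow> dep (Jt l (Suc t)) f"
  by (erule dep_mono) (rule Jt_mono, simp)

locale LN =
  fixes l :: nat and p :: "nat \<Rightarrow> real" and m :: nat
  assumes l1: "l \<ge> 1"
    and pr: "\<forall>i\<in>{1..l}. 0 \<le> p i \<and> p i < 1"
    and mm: "m \<in> {1..l}"
    and uniq: "\<forall>i\<in>{1..l}. i \<noteq> m \<longrightarrow> p i < p m"
begin

abbreviation "Ms \<equiv> erasure_space p"

definition "A = 1 - p m"
definition "dl = Min (insert 1 ((\<lambda>k. p m - p k) ` ({1..l} - {m})))"
definition "y = 1 + dl"
definition "u = 1 / (1 + dl)"
definition "cy = 1 + A * dl"
definition "Phi = cy * (1 - (A + dl) * dl / (1 + dl))"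
definition "psi k = p k + (1 - p k) * u"

lemma pk: "k \<in> {1..l} \<Longrightarrow> 0 \<le> p k \<and> p k < 1"
  using pr by auto

lemma m_le: "m \<le> l" and m_ge: "1 \<le> m" using mm by auto

lemma A_pos: "0 < A" and A_le: "A \<le> 1"
  using pk[OF mm] by (auto simp: A_def)

lemma dl_pos: "0 < dl"
  unfolding dl_def using uniq by (subst Min_gr_iff) auto

lemma dl_le1: "dl \<le> 1"
  unfolding dl_def by (rule Min_le) auto

lemma dl_le: "k \<in> {1..l} \<Longrightarrow> k \<noteq> m \<Longrightarrow> dl \<le> p m - p k"
  unfolding dl_def by (rule Min_le) auto

lemma y_gt1: "1 < y" using dl_pos by (simp add: y_def)
lemma u_pos: "0 < u" and u_lt1: "u < 1" using dl_pos by (auto simp: u_def)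
lemma yu: "y * u = 1" using dl_pos by (simp add: y_def u_def)
lemma cy_pos: "0 < cy" using mult_pos_pos[OF A_pos dl_pos] by (simp add: cy_def)
lemma cy_eq: "cy = (1 - A) + A * y" by (simp add: cy_def y_def algebra_simps)

lemma psi_nonneg: "k \<in> {1..l} \<Longrightarrow> 0 \<le> psi k"
  using pk[of k] u_pos by (simp add: psi_def)

lemma psi_le1: "k \<in> {1..l} \<Longrightarrow> psi k \<le> 1"
proof -
  assume k: "k \<in> {1..l}"
  have "psi k = 1 - (1 - p k) * (1 - u)" by (simp add: psi_def algebra_simps)
  also have "\<dots> \<le> 1" using pk[OF k] u_lt1 by simp
  finally show ?thesis .
qed

lemma Phi_nonneg: "0 \<le> Phi"
proof -
  have "(A + dl) * dl \<le> 1 + dl"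
  proof -
    have "(A + dl) * dl \<le> (1 + dl) * 1" using A_le dl_le1 dl_pos
      by (intro mult_mono) auto
    then show ?thesis by simp
  qed
  then have "(A + dl) * dl / (1 + dl) \<le> 1" using dl_pos by simp
  then show ?thesis unfolding Phi_def using cy_pos by simp
qed

lemma Phi_lt1: "Phi < 1"
proof -
  have d: "0 < dl" by (rule dl_pos)
  have key: "A - A * A - A * dl < 1"
  proof -
    have "0 \<le> (A - 1/2)^2" by simp
    then have "A - A * A \<le> 1/4" by (simp add: power2_eq_square algebra_simps)
    then show ?thesis using mult_pos_pos[OF A_pos d] by linarith
  qed
  have "Phi * (1 + dl) = (1 + A * dl) * (1 + dl - (A + dl) * dl)"
    unfolding Phi_def cy_def using d by (simp add: field_simps)
  also have "\<dots> = 1 + dl + dl * dl * (A - A * A - A * dl - 1)" by (simp add: algebra_simps)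
  also have "\<dots> < 1 + dl"
  proof -
    have "dl * dl * (A - A * A - A * dl - 1) < 0"
      using key d by (intro mult_pos_neg) auto
    then show ?thesis by simp
  qed
  finally show ?thesis using d by simp
qed

lemma cy_psi: "k \<in> {1..l} \<Longrightarrow> k \<noteq> m \<Longrightarrow> cy * psi k \<le> Phi"
proof -
  assume k: "k \<in> {1..l}" "k \<noteq> m"
  have "1 - p k \<ge> A + dl" using dl_le[OF k] by (simp add: A_def)
  have "psi k = 1 - (1 - p k) * (dl / (1 + dl))" using dl_pos
    by (simp add: psi_def u_def field_simps)
  also have "\<dots> \<le> 1 - (A + dl) * (dl / (1 + dl))"
    using \<open>1 - p k \<ge> A + dl\<close> dl_pos by (intro diff_left_mono mult_right_mono) auto
  finally have "psi k \<le> 1 - (A + dl) * dl / (1 + dl)" by simp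
  then show ?thesis unfolding Phi_def using cy_pos by (simp add: mult_left_mono)
qed

definition V :: "nat \<Rightarrow> nat \<Rightarrow> (nat \<times> nat \<Rightarrow> bool) \<Rightarrow> real" where
  "V k t \<omega> = (if k = 0 then 0 else y ^ zc m \<omega> t * u ^ rk \<infinity> (curry \<omega>) t k)"

lemma V_nonneg: "0 \<le> V k t \<omega>"
  using y_gt1 u_pos by (simp add: V_def)

lemma V_0: "k \<noteq> 0 \<Longrightarrow> V k 0 \<omega> = 1"
  by (simp add: V_def)

lemma dep_V: "k \<le> l \<Longrightarrow> dep (Jt l t) (V k t)"
  unfolding V_def
  by (rule dep_rk[where f="\<lambda>a b. if k = 0 then 0 else y ^ a * u ^ b"]) (use m_le in auto)

lemma dep_indV: "k \<le> l \<Longrightarrow> dep (Jt l t) (\<lambda>\<omega>. (if P (zc m \<omega> t) then 1 else 0) * V k t \<omega>)"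
  unfolding V_def
  by (rule dep_rk[where f="\<lambda>a b. (if P a then 1 else 0) * (if k = 0 then 0 else y ^ a * u ^ b)"]) (use m_le in auto)

lemma pathU:
  assumes k: "1 \<le> k" "k \<noteq> m"
  shows "V k (Suc t) \<omega> \<le> (if \<omega> (Suc t, m) then y else 1) *
            ((if \<omega> (Suc t, k) then u else 1) * V k t \<omega> + V (k - 1) t \<omega>)"
proof -
  define Z where "Z = zc m \<omega> t"
  define r where "r = rk \<infinity> (curry \<omega>) t k"
  define gy where "gy = (if \<omega> (Suc t, m) then y else 1)"
  define gk where "gk = (if \<omega> (Suc t, k) then u else 1)"
  have gy0: "0 \<le> gy" using y_gt1 by (simp add: gy_def)
  have gk0: "0 \<le> gk" using u_pos by (simp add: gk_def)
  have zS: "y ^ zc m \<omega> (Suc t) = y ^ Z * gy" by (simp add: Z_def gy_def)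
  have Vk: "V k t \<omega> = y ^ Z * u ^ r" using k by (simp add: V_def Z_def r_def)
  show ?thesis
  proof (cases "(if k \<le> 1 then \<infinity> else enat (rk \<infinity> (curry \<omega>) t (k - 1))) > enat r")
    case True
    then have "rk \<infinity> (curry \<omega>) (Suc t) k = r + (if \<omega> (Suc t, k) then 1 else 0)"
      by (simp add: r_def)
    then have "u ^ rk \<infinity> (curry \<omega>) (Suc t) k = u ^ r * gk" by (simp add: gk_def)
    then have "V k (Suc t) \<omega> = gy * (gk * V k t \<omega>)" using k zS Vk by (simp add: V_def)
    also have "\<dots> \<le> gy * (gk * V k t \<omega> + V (k - 1) t \<omega>)"
      using gy0 V_nonneg by (intro mult_left_mono) auto
    finally show ?thesis by (simp add: gy_def gk_def)
  next
    case False
    then have k2: "\<not> k \<le> 1" by auto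
    then have le: "rk \<infinity> (curry \<omega>) t (k - 1) \<le> r" using False by (auto simp: r_def)
    have "r \<le> rk \<infinity> (curry \<omega>) t (k - 1)" unfolding r_def using k2 by (intro rk_line_mono) auto
    with le have eq: "rk \<infinity> (curry \<omega>) t (k - 1) = r" by simp
    have "rk \<infinity> (curry \<omega>) (Suc t) k = r" using False by (simp add: r_def)
    then have "V k (Suc t) \<omega> = gy * V (k - 1) t \<omega>" using k k2 zS eq by (simp add: V_def Z_def)
    also have "\<dots> \<le> gy * (gk * V k t \<omega> + V (k - 1) t \<omega>)"
      using gy0 gk0 V_nonneg by (intro mult_left_mono) auto
    finally show ?thesis by (simp add: gy_def gk_def)
  qed
qed

lemma pathM:
  "V m (Suc t) \<omega> \<le> V m t \<omega> + ((if \<omega> (Suc t, m) then y else 1) - 1) * V (m - 1) t \<omega>"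
proof -
  define Z where "Z = zc m \<omega> t"
  define r where "r = rk \<infinity> (curry \<omega>) t m"
  define gy where "gy = (if \<omega> (Suc t, m) then y else 1)"
  have gy1: "1 \<le> gy" using y_gt1 by (simp add: gy_def)
  have zS: "y ^ zc m \<omega> (Suc t) = y ^ Z * gy" by (simp add: Z_def gy_def)
  have Vm: "V m t \<omega> = y ^ Z * u ^ r" using m_ge by (simp add: V_def Z_def r_def)
  show ?thesis
  proof (cases "(if m \<le> 1 then \<infinity> else enat (rk \<infinity> (curry \<omega>) t (m - 1))) > enat r")
    case True
    then have "rk \<infinity> (curry \<omega>) (Suc t) m = r + (if \<omega> (Suc t, m) then 1 else 0)"
      by (simp add: r_def)
    then have "V m (Suc t) \<omega> = y ^ Z * u ^ r * (if \<omega> (Suc t, m) then y * u else 1)"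
      using m_ge zS by (simp add: V_def Z_def gy_def)
    also have "\<dots> = V m t \<omega>" using yu Vm by simp
    also have "\<dots> \<le> V m t \<omega> + (gy - 1) * V (m - 1) t \<omega>"
      using gy1 V_nonneg by simp
    finally show ?thesis by (simp add: gy_def)
  next
    case False
    then have m2: "\<not> m \<le> 1" by auto
    then have le: "rk \<infinity> (curry \<omega>) t (m - 1) \<le> r" using False by (auto simp: r_def)
    have "r \<le> rk \<infinity> (curry \<omega>) t (m - 1)" unfolding r_def using m2 by (intro rk_line_mono) auto
    with le have eq: "rk \<infinity> (curry \<omega>) t (m - 1) = r" by simp
    have rkS: "rk \<infinity> (curry \<omega>) (Suc t) m = r" using False by (simp add: r_def)
    have Vm1: "V (m - 1) t \<omega> = y ^ Z * u ^ r" using eq m2 by (simp add: V_def Z_def)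
    have "V m (Suc t) \<omega> = gy * V m t \<omega>" using m_ge zS Vm rkS by (simp del: rk.simps zc.simps add: V_def)
    also have "gy * V m t \<omega> = V m t \<omega> + (gy - 1) * V (m - 1) t \<omega>"
      using Vm Vm1 by (simp add: algebra_simps)
    finally show ?thesis by (simp add: gy_def)
  qed
qed

definition "e k t = (\<integral>\<omega>. V k t \<omega> \<partial>Ms)"

lemma e_nonneg: "0 \<le> e k t"
  unfolding e_def by (rule integral_nonneg_AE) (simp add: V_nonneg)

lemma e_0: "k \<noteq> 0 \<Longrightarrow> e k 0 = 1"
proof -
  interpret prob_space Ms by (rule prob_space_E)
  assume "k \<noteq> 0" then show ?thesis using prob_space by (simp add: e_def V_0)
qed

lemma e_zero: "e 0 t = 0"
  by (simp add: e_def V_def)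

lemma Eg_m: "(\<integral>\<omega>. (g (\<omega> (s, m)) :: real) \<partial>Ms) = g True * A + g False * (1 - A)"
  using coord_expect[of p "(s, m)" g] pk[OF mm] by (simp add: A_def)

lemma Eg_k: "k \<in> {1..l} \<Longrightarrow> (\<integral>\<omega>. (g (\<omega> (s, k)) :: real) \<partial>Ms) = g True * (1 - p k) + g False * p k"
  using coord_expect[of p "(s, k)" g] pk[of k] by simp

lemma int_V: "k \<le> l \<Longrightarrow> integrable Ms (V k t)"
  by (rule dep_integrable[OF finite_Jt dep_V])

lemma E1:
  assumes k: "k \<in> {1..l}" "k \<noteq> m"
  shows "e k (Suc t) \<le> cy * psi k * e k t + cy * e (k - 1) t"
proof -
  let ?a = "(Suc t, m)" and ?b = "(Suc t, k)"
  define gy where "gy = (\<lambda>b. if b then y else (1::real))"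
  define gk where "gk = (\<lambda>b. if b then u else (1::real))"
  have kl: "k \<le> l" "k - 1 \<le> l" using k by auto
  have d1: "dep (Jt l t) (V k t)" "dep (Jt l t) (V (k - 1) t)" using kl by (auto intro: dep_V)
  have ab: "?a \<in> Jt l (Suc t)" "?b \<in> Jt l (Suc t)" using kl m_le by auto
  define F where "F = (\<lambda>\<omega>. V k t \<omega> * gy (\<omega> ?a) * gk (\<omega> ?b) + V (k - 1) t \<omega> * gy (\<omega> ?a))"
  have dF1: "dep (Jt l (Suc t)) (\<lambda>\<omega>. V k t \<omega> * gy (\<omega> ?a) * gk (\<omega> ?b))"
    using dep_gen[OF dep_Suc[OF d1(1)] dep_Suc[OF d1(1)] ab, where H="\<lambda>x z v w. v * gy x * gk z"] by simp
  have dF2: "dep (Jt l (Suc t)) (\<lambda>\<omega>. V (k - 1) t \<omega> * gy (\<omega> ?a))"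
    using dep_gen[OF dep_Suc[OF d1(2)] dep_Suc[OF d1(2)] ab, where H="\<lambda>x z v w. v * gy x"] by simp
  have i1: "integrable Ms (\<lambda>\<omega>. V k t \<omega> * gy (\<omega> ?a) * gk (\<omega> ?b))"
    by (rule dep_integrable[OF finite_Jt dF1])
  have i2: "integrable Ms (\<lambda>\<omega>. V (k - 1) t \<omega> * gy (\<omega> ?a))"
    by (rule dep_integrable[OF finite_Jt dF2])
  have cm: "(\<integral>\<omega>. gy (\<omega> (Suc t, m)) \<partial>Ms) = cy"
    using Eg_m[of gy "Suc t"] by (simp add: gy_def cy_eq algebra_simps)
  have ck: "(\<integral>\<omega>. gk (\<omega> (Suc t, k)) \<partial>Ms) = psi k"
    using Eg_k[OF k(1), of gk "Suc t"] by (simp add: gk_def psi_def algebra_simps)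
  have "e k (Suc t) \<le> (\<integral>\<omega>. F \<omega> \<partial>Ms)"
    unfolding e_def
  proof (rule integral_mono)
    show "integrable Ms (V k (Suc t))" using kl(1) by (rule int_V)
    show "integrable Ms F" unfolding F_def using i1 i2 by simp
    fix \<omega> show "V k (Suc t) \<omega> \<le> F \<omega>"
      using pathU[of k t \<omega>] k by (simp add: F_def gy_def gk_def algebra_simps)
  qed
  also have "(\<integral>\<omega>. F \<omega> \<partial>Ms) = (\<integral>\<omega>. V k t \<omega> * gy (\<omega> ?a) * gk (\<omega> ?b) \<partial>Ms) +
      (\<integral>\<omega>. V (k - 1) t \<omega> * gy (\<omega> ?a) \<partial>Ms)"
    unfolding F_def using i1 i2 by simp
  also have "(\<integral>\<omega>. V k t \<omega> * gy (\<omega> ?a) * gk (\<omega> ?b) \<partial>Ms) = e k t * cy * psi k"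
    using one_step2[OF finite_Jt d1(1), where a="(Suc t, m)" and b="(Suc t, k)" and ga=gy and gb=gk and p=p] k cm ck
    by (simp add: e_def)
  also have "(\<integral>\<omega>. V (k - 1) t \<omega> * gy (\<omega> ?a) \<partial>Ms) = e (k - 1) t * cy"
    using one_step[OF finite_Jt d1(2), where a="(Suc t, m)" and g=gy and p=p] cm
    by (simp add: e_def)
  finally show ?thesis by (simp add: algebra_simps)
qed

lemma E2: "e m (Suc t) \<le> e m t + (cy - 1) * e (m - 1) t"
proof -
  define g where "g = (\<lambda>b. (if b then y else 1) - (1::real))"
  have d1: "dep (Jt l t) (V (m - 1) t)" using m_le by (intro dep_V) auto
  have ab: "(Suc t, m) \<in> Jt l (Suc t)" using m_le by auto
  have dF: "dep (Jt l (Suc t)) (\<lambda>\<omega>. V (m - 1) t \<omega> * g (\<omega> (Suc t, m)))"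
    using dep_gen[OF dep_Suc[OF d1] dep_Suc[OF d1] ab ab, where H="\<lambda>x z v w. v * g x"] by simp
  have i2: "integrable Ms (\<lambda>\<omega>. V (m - 1) t \<omega> * g (\<omega> (Suc t, m)))"
    by (rule dep_integrable[OF finite_Jt dF])
  have cm: "(\<integral>\<omega>. g (\<omega> (Suc t, m)) \<partial>Ms) = cy - 1"
    using Eg_m[of g "Suc t"] by (simp add: g_def cy_def y_def)
  have "e m (Suc t) \<le> (\<integral>\<omega>. V m t \<omega> + V (m - 1) t \<omega> * g (\<omega> (Suc t, m)) \<partial>Ms)"
    unfolding e_def
  proof (rule integral_mono)
    show "integrable Ms (V m (Suc t))" using m_le by (rule int_V)
    show "integrable Ms (\<lambda>\<omega>. V m t \<omega> + V (m - 1) t \<omega> * g (\<omega> (Suc t, m)))"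
      using i2 int_V[OF m_le] by simp
    fix \<omega> show "V m (Suc t) \<omega> \<le> V m t \<omega> + V (m - 1) t \<omega> * g (\<omega> (Suc t, m))"
      using pathM[of t \<omega>] by (simp add: g_def algebra_simps)
  qed
  also have "\<dots> = e m t + (\<integral>\<omega>. V (m - 1) t \<omega> * g (\<omega> (Suc t, m)) \<partial>Ms)"
    using i2 int_V[OF m_le] by (simp add: e_def)
  also have "(\<integral>\<omega>. V (m - 1) t \<omega> * g (\<omega> (Suc t, m)) \<partial>Ms) = e (m - 1) t * (cy - 1)"
    using one_step[OF finite_Jt d1, where a="(Suc t, m)" and g=g and p=p] cm
    by (simp add: e_def)
  finally show ?thesis by (simp add: algebra_simps)
qed

lemma cy_ge1: "1 \<le> cy" using A_pos dl_pos by (simp add: cy_def)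

lemma E1':
  assumes k: "k \<in> {1..l}" "k \<noteq> m"
  shows "e k (Suc t) \<le> Phi * e k t + cy * e (k - 1) t"
proof -
  have "cy * psi k * e k t \<le> Phi * e k t"
    using cy_psi[OF k] e_nonneg by (intro mult_right_mono) auto
  then show ?thesis using E1[OF k, of t] by simp
qed

definition "S k TT = (\<Sum>t<TT. e k t)"

lemma S_nonneg: "0 \<le> S k TT"
  unfolding S_def by (intro sum_nonneg e_nonneg)

primrec Cu :: "nat \<Rightarrow> real" where
  "Cu 0 = 0"
| "Cu (Suc k) = (1 + cy * Cu k) / (1 - Phi)"

lemma up: "k < m \<Longrightarrow> S k TT \<le> Cu k"
proof (induction k arbitrary: TT)
  case 0 then show ?case by (simp add: S_def e_zero)
next
  case (Suc k)
  have k: "Suc k \<in> {1..l}" "Suc k \<noteq> m" using Suc.prems m_le by auto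
  have IH: "S k TT \<le> Cu k" using Suc.IH Suc.prems by simp
  have st: "e (Suc k) (Suc t) \<le> Phi * e (Suc k) t + cy * e k t" for t
    using E1'[OF k, of t] by simp
  have a1: "S (Suc k) (Suc TT) = e (Suc k) 0 + (\<Sum>t<TT. e (Suc k) (Suc t))"
    unfolding S_def by (rule sum.lessThan_Suc_shift)
  have a2: "(\<Sum>t<TT. e (Suc k) (Suc t)) \<le> (\<Sum>t<TT. Phi * e (Suc k) t + cy * e k t)"
    by (rule sum_mono) (rule st)
  have a3: "(\<Sum>t<TT. Phi * e (Suc k) t + cy * e k t) = Phi * S (Suc k) TT + cy * S k TT"
    unfolding S_def by (simp only: sum.distrib sum_distrib_left)
  have a: "S (Suc k) (Suc TT) \<le> e (Suc k) 0 + (Phi * S (Suc k) TT + cy * S k TT)"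
    using a1 a2 a3 by linarith
  have e0: "e (Suc k) 0 = 1" by (rule e_0) simp
  have b: "S (Suc k) (Suc TT) = S (Suc k) TT + e (Suc k) TT"
    unfolding S_def by (rule sum.lessThan_Suc)
  have "(1 - Phi) * S (Suc k) TT = S (Suc k) TT - Phi * S (Suc k) TT" by (simp add: algebra_simps)
  then have "(1 - Phi) * S (Suc k) TT \<le> 1 + cy * S k TT"
    using a b e0 e_nonneg[of "Suc k" TT] by linarith
  also have "\<dots> \<le> 1 + cy * Cu k" using IH cy_pos by simp
  finally have "(1 - Phi) * S (Suc k) TT \<le> 1 + cy * Cu k" .
  then show ?case using Phi_lt1 by (simp add: pos_le_divide_eq mult.commute)
qed

definition "Bm = 1 + (cy - 1) * Cu (m - 1)"

lemma em: "e m TT \<le> Bm"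
proof -
  have "e m TT \<le> 1 + (cy - 1) * S (m - 1) TT"
  proof (induction TT)
    case 0 then show ?case using m_ge by (simp add: e_0 S_def)
  next
    case (Suc TT)
    have "e m (Suc TT) \<le> e m TT + (cy - 1) * e (m - 1) TT" by (rule E2)
    also have "\<dots> \<le> 1 + (cy - 1) * S (m - 1) TT + (cy - 1) * e (m - 1) TT" using Suc by simp
    also have "\<dots> = 1 + (cy - 1) * S (m - 1) (Suc TT)" by (simp add: S_def algebra_simps)
    finally show ?case .
  qed
  also have "\<dots> \<le> Bm" unfolding Bm_def using up[of "m - 1" TT] m_ge cy_ge1
    by (intro add_left_mono mult_left_mono) auto
  finally show ?thesis .
qed

lemma Cu_nonneg: "0 \<le> Cu k"
proof (induction k)
  case (Suc k)
  have "0 \<le> 1 + cy * Cu k" using Suc cy_pos by simp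
  then show ?case using Phi_lt1 by simp
qed simp

lemma Bm_ge1: "1 \<le> Bm"
  unfolding Bm_def using Cu_nonneg cy_ge1 by simp

primrec Bd :: "nat \<Rightarrow> real" where
  "Bd 0 = Bm"
| "Bd (Suc j) = 1 + cy * Bd j / (1 - Phi)"

lemma Bd_ge1: "1 \<le> Bd j"
proof (induction j)
  case (Suc j)
  have "0 \<le> cy * Bd j" using Suc cy_pos by simp
  then have "0 \<le> cy * Bd j / (1 - Phi)" using Phi_lt1 by simp
  then show ?case by simp
qed (simp add: Bm_ge1)

lemma down: "m + j \<le> l \<Longrightarrow> e (m + j) t \<le> Bd j"
proof (induction j arbitrary: t)
  case 0 then show ?case using em by simp
next
  case (Suc j)
  have k: "m + Suc j \<in> {1..l}" "m + Suc j \<noteq> m" using Suc.prems m_ge by auto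
  have IH: "e (m + j) t' \<le> Bd j" for t' using Suc by simp
  show ?case
  proof (induction t)
    case 0 then show ?case using Bd_ge1[of "Suc j"] k by (simp add: e_0)
  next
    case (Suc t)
    have "e (m + Suc j) (Suc t) \<le> Phi * e (m + Suc j) t + cy * e (m + j) t"
      using E1'[OF k, of t] by simp
    also have "\<dots> \<le> Phi * Bd (Suc j) + cy * Bd j"
      using Suc IH[of t] Phi_nonneg cy_pos by (intro add_mono mult_left_mono) auto
    also have "\<dots> \<le> Bd (Suc j)"
    proof -
      have ne: "1 - Phi \<noteq> 0" using Phi_lt1 by simp
      define X where "X = cy * Bd j / (1 - Phi)"
      have "cy * Bd j = (1 - Phi) * X" using ne by (simp add: X_def)
      moreover have "Bd (Suc j) = 1 + X" by (simp add: X_def)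
      ultimately have "Phi * Bd (Suc j) + cy * Bd j = Phi + X"
        by (simp add: algebra_simps)
      then have "Phi * Bd (Suc j) + cy * Bd j = Phi + cy * Bd j / (1 - Phi)" by (simp add: X_def)
      then show ?thesis using Phi_lt1 by simp
    qed
    finally show ?case .
  qed
qed

lemma int_dep: "dep (Jt l t) (f :: _ \<Rightarrow> real) \<Longrightarrow> integrable Ms f"
  by (rule dep_integrable[OF finite_Jt])

lemma dep_zc_real: "dep (Jt l t) (\<lambda>\<omega>. f (zc m \<omega> t))"
  by (rule dep_zc[OF m_le])

lemma E_zc: "(\<integral>\<omega>. real (zc m \<omega> t) \<partial>Ms) = A * real t"
proof (induction t)
  case 0 then show ?case by simp
next
  case (Suc t)
  have i1: "integrable Ms (\<lambda>\<omega>. real (zc m \<omega> t))" by (rule int_dep[OF dep_zc_real])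
  have d2: "dep (Jt l (Suc t)) (\<lambda>\<omega>. (if \<omega> (Suc t, m) then 1 else 0 :: real))"
    by (rule dep_coord) (use m_le in simp)
  have i2: "integrable Ms (\<lambda>\<omega>. (if \<omega> (Suc t, m) then 1 else 0 :: real))" by (rule int_dep[OF d2])
  have "(\<integral>\<omega>. real (zc m \<omega> (Suc t)) \<partial>Ms) =
        (\<integral>\<omega>. real (zc m \<omega> t) + (if \<omega> (Suc t, m) then 1 else 0 :: real) \<partial>Ms)"
    by (rule Bochner_Integration.integral_cong) auto
  also have "\<dots> = (\<integral>\<omega>. real (zc m \<omega> t) \<partial>Ms) + (\<integral>\<omega>. (if \<omega> (Suc t, m) then 1 else 0 :: real) \<partial>Ms)"
    using i1 i2 by (rule Bochner_Integration.integral_add)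
  also have "(\<integral>\<omega>. (if \<omega> (Suc t, m) then 1 else 0 :: real) \<partial>Ms) = A"
    using Eg_m[of "\<lambda>b. if b then 1 else 0" "Suc t"] by simp
  finally show ?case using Suc by (simp add: algebra_simps)
qed

lemma rho_le_zc: "rk s (curry \<omega>) t l \<le> zc m \<omega> t"
proof -
  have "rk s (curry \<omega>) t l \<le> rk s (curry \<omega>) t m" using m_ge m_le by (intro rk_line_mono')
  also have "\<dots> \<le> zc m \<omega> t" by (rule rk_le_zc)
  finally show ?thesis .
qed

lemma V_l_eq: "V l t \<omega> = y ^ (zc m \<omega> t - rk \<infinity> (curry \<omega>) t l)"
proof -
  define d where "d = zc m \<omega> t - rk \<infinity> (curry \<omega>) t l"
  have z: "zc m \<omega> t = d + rk \<infinity> (curry \<omega>) t l" using rho_le_zc[of \<infinity> \<omega> t] by (simp add: d_def)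
  have "V l t \<omega> = y ^ d * (y * u) ^ rk \<infinity> (curry \<omega>) t l"
    using l1 by (simp add: V_def z power_add power_mult_distrib)
  then show ?thesis by (simp add: yu d_def)
qed

lemma gap_le: "real (zc m \<omega> t) - real (rk \<infinity> (curry \<omega>) t l) \<le> V l t \<omega> / dl"
proof -
  define d where "d = zc m \<omega> t - rk \<infinity> (curry \<omega>) t l"
  have "1 + real d * dl \<le> (1 + dl) ^ d" using dl_pos by (intro Bernoulli_inequality) simp
  then have "real d \<le> V l t \<omega> / dl" using dl_pos
    by (simp add: V_l_eq d_def y_def pos_le_divide_eq)
  then show ?thesis using rho_le_zc[of \<infinity> \<omega> t] by (simp add: d_def of_nat_diff)
qed

lemma part1: "\<bar>A * real t - (\<integral>\<omega>. real (R l \<infinity> t \<omega>) \<partial>Ms)\<bar> \<le> Bd (l - m) / dl"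
proof -
  have dR: "dep (Jt l t) (\<lambda>\<omega>. real (rk \<infinity> (curry \<omega>) t l))"
    using dep_rk[of l l m t "\<lambda>a b. real b"] m_le by simp
  have iR: "integrable Ms (\<lambda>\<omega>. real (rk \<infinity> (curry \<omega>) t l))" by (rule int_dep[OF dR])
  have iZ: "integrable Ms (\<lambda>\<omega>. real (zc m \<omega> t))" by (rule int_dep[OF dep_zc_real])
  have eq: "A * real t - (\<integral>\<omega>. real (R l \<infinity> t \<omega>) \<partial>Ms) =
      (\<integral>\<omega>. real (zc m \<omega> t) - real (rk \<infinity> (curry \<omega>) t l) \<partial>Ms)"
    using iR iZ by (simp add: E_zc[symmetric] R_def)
  have ge: "0 \<le> (\<integral>\<omega>. real (zc m \<omega> t) - real (rk \<infinity> (curry \<omega>) t l) \<partial>Ms)"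
    by (rule integral_nonneg_AE) (simp add: rho_le_zc)
  have "(\<integral>\<omega>. real (zc m \<omega> t) - real (rk \<infinity> (curry \<omega>) t l) \<partial>Ms) \<le> (\<integral>\<omega>. V l t \<omega> / dl \<partial>Ms)"
    by (rule integral_mono) (use iR iZ int_V[of l t] gap_le in auto)
  also have "\<dots> = e l t / dl" by (simp add: e_def)
  also have "\<dots> \<le> Bd (l - m) / dl"
    using down[of "l - m" t] m_le dl_pos by (simp add: divide_right_mono)
  finally show ?thesis using eq ge by simp
qed

lemma int_1: "dep (Jt l t) F \<Longrightarrow> k \<le> l \<Longrightarrow> integrable Ms (\<lambda>\<omega>. (F \<omega> :: real) * ga (\<omega> (Suc t, k)))"
  using dep_gen[OF dep_Suc[of l t F] dep_Suc[of l t F], of "(Suc t, k)" "(Suc t, k)" "\<lambda>x z v w. v * ga x"]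
  by (intro dep_integrable[OF finite_Jt, of l "Suc t"]) auto

lemma int_2: "dep (Jt l t) F \<Longrightarrow> k \<le> l \<Longrightarrow>
   integrable Ms (\<lambda>\<omega>. (F \<omega> :: real) * ga (\<omega> (Suc t, m)) * gb (\<omega> (Suc t, k)))"
  using dep_gen[OF dep_Suc[of l t F] dep_Suc[of l t F], of "(Suc t, m)" "(Suc t, k)" "\<lambda>x z v w. v * ga x * gb z"] m_le
  by (intro dep_integrable[OF finite_Jt, of l "Suc t"]) auto

lemma exp_1:
  assumes d: "dep (Jt l t) F"
  shows "(\<integral>\<omega>. (F \<omega> :: real) * ga (\<omega> (Suc t, m)) \<partial>Ms) = (\<integral>\<omega>. F \<omega> \<partial>Ms) * (ga True * A + ga False * (1 - A))"
  using one_step[OF finite_Jt d, where a="(Suc t, m)" and g=ga and p=p] Eg_m[of ga "Suc t"] by simp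

lemma exp_2:
  assumes d: "dep (Jt l t) F" and k: "k \<in> {1..l}" "k \<noteq> m"
  shows "(\<integral>\<omega>. (F \<omega> :: real) * ga (\<omega> (Suc t, m)) * gb (\<omega> (Suc t, k)) \<partial>Ms) =
   (\<integral>\<omega>. F \<omega> \<partial>Ms) * (ga True * A + ga False * (1 - A)) * (gb True * (1 - p k) + gb False * p k)"
  using one_step2[OF finite_Jt d, where a="(Suc t, m)" and b="(Suc t, k)" and ga=ga and gb=gb and p=p]
    Eg_m[of ga "Suc t"] Eg_k[OF k(1), of gb "Suc t"] k
  by simp

definition ind :: "bool \<Rightarrow> real" where "ind b = (if b then 1 else 0)"

lemma ind_simps[simp]: "ind True = 1" "ind False = 0" by (simp_all add: ind_def)
lemma ind_nonneg[simp]: "0 \<le> ind b" by (simp add: ind_def)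
lemma ind_le1[simp]: "ind b \<le> 1" by (simp add: ind_def)

lemma dep_iV: "k \<le> l \<Longrightarrow> dep (Jt l t) (\<lambda>\<omega>. ind (P (zc m \<omega> t)) * V k t \<omega>)"
  using dep_indV[of k t P] by (simp add: ind_def)

definition "hN k N TT = (\<Sum>t<TT. \<integral>\<omega>. ind (zc m \<omega> t = N) * V k t \<omega> \<partial>Ms)"
definition "gN k N TT = (\<Sum>t<TT. \<integral>\<omega>. ind (zc m \<omega> t + 1 = N) * V k t \<omega> \<partial>Ms)"

lemma gN_0: "gN k 0 TT = 0" by (simp add: gN_def)
lemma gN_Suc: "gN k (Suc N) TT = hN k N TT" by (simp add: gN_def hN_def)

lemma hN_nonneg: "0 \<le> hN k N TT"
  unfolding hN_def by (intro sum_nonneg integral_nonneg_AE) (simp add: V_nonneg)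

lemma gN_nonneg: "0 \<le> gN k N TT"
  unfolding gN_def by (intro sum_nonneg integral_nonneg_AE) (simp add: V_nonneg)

lemma hN_mono: "hN k N TT \<le> hN k N (Suc TT)"
proof -
  have "0 \<le> (\<integral>\<omega>. ind (zc m \<omega> TT = N) * V k TT \<omega> \<partial>Ms)"
    by (intro integral_nonneg_AE) (simp add: V_nonneg)
  then show ?thesis by (simp add: hN_def)
qed

lemma hN_first: "k \<noteq> 0 \<Longrightarrow> (\<integral>\<omega>. ind (zc m \<omega> 0 = N) * V k 0 \<omega> \<partial>Ms) \<le> 1"
proof -
  interpret prob_space Ms by (rule prob_space_E)
  assume "k \<noteq> 0"
  then show ?thesis using prob_space by (simp add: V_0 ind_def)
qed

lemma pathPalmU:
  assumes k: "1 \<le> k" "k \<noteq> m"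
  shows "ind (zc m \<omega> (Suc t) = N) * V k (Suc t) \<omega> \<le>
     ind (zc m \<omega> t = N) * V k t \<omega> * (if \<omega> (Suc t, m) then 0 else 1) * (if \<omega> (Suc t, k) then u else 1)
   + ind (zc m \<omega> t = N) * V (k - 1) t \<omega> * (if \<omega> (Suc t, m) then 0 else 1)
   + ind (zc m \<omega> t + 1 = N) * V k t \<omega> * (if \<omega> (Suc t, m) then y else 0) * (if \<omega> (Suc t, k) then u else 1)
   + ind (zc m \<omega> t + 1 = N) * V (k - 1) t \<omega> * (if \<omega> (Suc t, m) then y else 0)"
proof -
  have P: "V k (Suc t) \<omega> \<le> (if \<omega> (Suc t, m) then y else 1) *
            ((if \<omega> (Suc t, k) then u else 1) * V k t \<omega> + V (k - 1) t \<omega>)"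
    by (rule pathU[OF k])
  show ?thesis
  proof (cases "\<omega> (Suc t, m)")
    case True
    have eqI: "ind (zc m \<omega> (Suc t) = N) = ind (zc m \<omega> t + 1 = N)" using True by simp
    have P': "V k (Suc t) \<omega> \<le> y * ((if \<omega> (Suc t, k) then u else 1) * V k t \<omega> + V (k - 1) t \<omega>)"
      using P True by simp
    have "ind (zc m \<omega> (Suc t) = N) * V k (Suc t) \<omega> \<le> ind (zc m \<omega> t + 1 = N) *
        (y * ((if \<omega> (Suc t, k) then u else 1) * V k t \<omega> + V (k - 1) t \<omega>))"
      unfolding eqI using P' by (rule mult_left_mono) simp
    then show ?thesis using True by (simp add: algebra_simps)
  next
    case False
    have eqI: "ind (zc m \<omega> (Suc t) = N) = ind (zc m \<omega> t = N)" using False by simp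
    have P': "V k (Suc t) \<omega> \<le> ((if \<omega> (Suc t, k) then u else 1) * V k t \<omega> + V (k - 1) t \<omega>)"
      using P False by simp
    have "ind (zc m \<omega> (Suc t) = N) * V k (Suc t) \<omega> \<le> ind (zc m \<omega> t = N) *
        (((if \<omega> (Suc t, k) then u else 1) * V k t \<omega> + V (k - 1) t \<omega>))"
      unfolding eqI using P' by (rule mult_left_mono) simp
    then show ?thesis using False by (simp add: algebra_simps)
  qed
qed

lemma PalmU:
  assumes k: "k \<in> {1..l}" "k \<noteq> m"
  shows "(\<integral>\<omega>. ind (zc m \<omega> (Suc t) = N) * V k (Suc t) \<omega> \<partial>Ms) \<le>
     (1 - A) * psi k * (\<integral>\<omega>. ind (zc m \<omega> t = N) * V k t \<omega> \<partial>Ms)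
   + (1 - A) * (\<integral>\<omega>. ind (zc m \<omega> t = N) * V (k - 1) t \<omega> \<partial>Ms)
   + A * y * psi k * (\<integral>\<omega>. ind (zc m \<omega> t + 1 = N) * V k t \<omega> \<partial>Ms)
   + A * y * (\<integral>\<omega>. ind (zc m \<omega> t + 1 = N) * V (k - 1) t \<omega> \<partial>Ms)"
proof -
  define g0 where "g0 = (\<lambda>b. if b then 0 else (1::real))"
  define g1 where "g1 = (\<lambda>b. if b then y else (0::real))"
  define gk where "gk = (\<lambda>b. if b then u else (1::real))"
  have kl: "k \<le> l" "k - 1 \<le> l" using k by auto
  have d1: "dep (Jt l t) (\<lambda>\<omega>. ind (zc m \<omega> t = N) * V k t \<omega>)" using kl(1) by (rule dep_iV)
  have d2: "dep (Jt l t) (\<lambda>\<omega>. ind (zc m \<omega> t = N) * V (k - 1) t \<omega>)" using kl by (intro dep_iV)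
  have d3: "dep (Jt l t) (\<lambda>\<omega>. ind (zc m \<omega> t + 1 = N) * V k t \<omega>)" using kl by (intro dep_iV)
  have d4: "dep (Jt l t) (\<lambda>\<omega>. ind (zc m \<omega> t + 1 = N) * V (k - 1) t \<omega>)" using kl by (intro dep_iV)
  let ?f1 = "\<lambda>\<omega>. ind (zc m \<omega> t = N) * V k t \<omega> * g0 (\<omega> (Suc t, m)) * gk (\<omega> (Suc t, k))"
  let ?f2 = "\<lambda>\<omega>. ind (zc m \<omega> t = N) * V (k - 1) t \<omega> * g0 (\<omega> (Suc t, m))"
  let ?f3 = "\<lambda>\<omega>. ind (zc m \<omega> t + 1 = N) * V k t \<omega> * g1 (\<omega> (Suc t, m)) * gk (\<omega> (Suc t, k))"
  let ?f4 = "\<lambda>\<omega>. ind (zc m \<omega> t + 1 = N) * V (k - 1) t \<omega> * g1 (\<omega> (Suc t, m))"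
  have i1: "integrable Ms ?f1" using int_2[OF d1 kl(1)] .
  have i2: "integrable Ms ?f2" using int_1[OF d2 m_le] .
  have i3: "integrable Ms ?f3" using int_2[OF d3 kl(1)] .
  have i4: "integrable Ms ?f4" using int_1[OF d4 m_le] .
  have i0: "integrable Ms (\<lambda>\<omega>. ind (zc m \<omega> (Suc t) = N) * V k (Suc t) \<omega>)"
    using int_dep[OF dep_iV[OF kl(1), of "Suc t" "\<lambda>x. x = N"]] .
  have "(\<integral>\<omega>. ind (zc m \<omega> (Suc t) = N) * V k (Suc t) \<omega> \<partial>Ms) \<le>
        (\<integral>\<omega>. ?f1 \<omega> + ?f2 \<omega> + ?f3 \<omega> + ?f4 \<omega> \<partial>Ms)"
  proof (rule integral_mono)
    show "integrable Ms (\<lambda>\<omega>. ?f1 \<omega> + ?f2 \<omega> + ?f3 \<omega> + ?f4 \<omega>)" using i1 i2 i3 i4 by simp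
    fix \<omega> show "ind (zc m \<omega> (Suc t) = N) * V k (Suc t) \<omega> \<le> ?f1 \<omega> + ?f2 \<omega> + ?f3 \<omega> + ?f4 \<omega>"
      using pathPalmU[of k \<omega> t N] k by (simp add: g0_def g1_def gk_def)
  qed (rule i0)
  also have "(\<integral>\<omega>. ?f1 \<omega> + ?f2 \<omega> + ?f3 \<omega> + ?f4 \<omega> \<partial>Ms) =
     (\<integral>\<omega>. ?f1 \<omega> \<partial>Ms) + (\<integral>\<omega>. ?f2 \<omega> \<partial>Ms) + (\<integral>\<omega>. ?f3 \<omega> \<partial>Ms) + (\<integral>\<omega>. ?f4 \<omega> \<partial>Ms)"
    using i1 i2 i3 i4 by simp
  also have "(\<integral>\<omega>. ?f1 \<omega> \<partial>Ms) = (1 - A) * psi k * (\<integral>\<omega>. ind (zc m \<omega> t = N) * V k t \<omega> \<partial>Ms)"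
    using exp_2[OF d1 k, of g0 gk] by (simp add: g0_def gk_def psi_def algebra_simps)
  also have "(\<integral>\<omega>. ?f2 \<omega> \<partial>Ms) = (1 - A) * (\<integral>\<omega>. ind (zc m \<omega> t = N) * V (k - 1) t \<omega> \<partial>Ms)"
    using exp_1[OF d2, of g0] by (simp add: g0_def algebra_simps)
  also have "(\<integral>\<omega>. ?f3 \<omega> \<partial>Ms) = A * y * psi k * (\<integral>\<omega>. ind (zc m \<omega> t + 1 = N) * V k t \<omega> \<partial>Ms)"
    using exp_2[OF d3 k, of g1 gk] by (simp add: g1_def gk_def psi_def algebra_simps)
  also have "(\<integral>\<omega>. ?f4 \<omega> \<partial>Ms) = A * y * (\<integral>\<omega>. ind (zc m \<omega> t + 1 = N) * V (k - 1) t \<omega> \<partial>Ms)"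
    using exp_1[OF d4, of g1] by (simp add: g1_def algebra_simps)
  finally show ?thesis .
qed

lemma gapm_mono: "t \<le> t' \<Longrightarrow>
  zc m \<omega> t - rk \<infinity> (curry \<omega>) t m \<le> zc m \<omega> t' - rk \<infinity> (curry \<omega>) t' m"
proof (induction t' rule: dec_induct)
  case base then show ?case by simp
next
  case (step t')
  have a: "rk \<infinity> (curry \<omega>) t' m \<le> zc m \<omega> t'" by (rule rk_le_zc)
  have b: "rk \<infinity> (curry \<omega>) (Suc t') m \<le> zc m \<omega> (Suc t')" by (rule rk_le_zc)
  have c: "rk \<infinity> (curry \<omega>) (Suc t') m \<le> rk \<infinity> (curry \<omega>) t' m + (if \<omega> (Suc t', m) then 1 else 0)"
    by auto
  have d: "zc m \<omega> (Suc t') = zc m \<omega> t' + (if \<omega> (Suc t', m) then 1 else 0)" by simp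
  have "zc m \<omega> t' - rk \<infinity> (curry \<omega>) t' m \<le> zc m \<omega> (Suc t') - rk \<infinity> (curry \<omega>) (Suc t') m"
    using a b c d by linarith
  then show ?case using step by linarith
qed

lemma V_m_eq: "V m t \<omega> = y ^ (zc m \<omega> t - rk \<infinity> (curry \<omega>) t m)"
proof -
  define d where "d = zc m \<omega> t - rk \<infinity> (curry \<omega>) t m"
  have z: "zc m \<omega> t = d + rk \<infinity> (curry \<omega>) t m" using rk_le_zc[of \<infinity> \<omega> t m] by (simp add: d_def)
  have "V m t \<omega> = y ^ d * (y * u) ^ rk \<infinity> (curry \<omega>) t m"
    using m_ge by (simp add: V_def z power_add power_mult_distrib)
  then show ?thesis by (simp add: yu d_def)
qed

lemma Vm_mono: "t \<le> t' \<Longrightarrow> V m t \<omega> \<le> V m t' \<omega>"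
  unfolding V_m_eq using y_gt1 by (intro power_increasing gapm_mono) auto

lemma pathPalmM_term:
  assumes "t < TT"
  shows "ind (zc m \<omega> (Suc t) = N) * V m (Suc t) \<omega> \<le>
     ind (zc m \<omega> t = N) * V m t \<omega> * (if \<omega> (Suc t, m) then 0 else 1)
   + (ind (zc m \<omega> t < N) - ind (zc m \<omega> (Suc t) < N)) * V m TT \<omega>"
proof (cases "\<omega> (Suc t, m)")
  case True
  have "V m (Suc t) \<omega> \<le> V m TT \<omega>" using assms by (intro Vm_mono) simp
  then have "ind (zc m \<omega> (Suc t) = N) * V m (Suc t) \<omega> \<le> ind (zc m \<omega> (Suc t) = N) * V m TT \<omega>"
    by (rule mult_left_mono) simp
  moreover have "ind (zc m \<omega> (Suc t) = N) = ind (zc m \<omega> t < N) - ind (zc m \<omega> (Suc t) < N)"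
    using True by (simp add: ind_def)
  ultimately show ?thesis using True by simp
next
  case False
  have "V m (Suc t) \<omega> \<le> V m t \<omega>" using pathM[of t \<omega>] False by simp
  then show ?thesis using False by (simp add: mult_left_mono)
qed

lemma pathPalmM:
  "(\<Sum>t<TT. ind (zc m \<omega> (Suc t) = N) * V m (Suc t) \<omega>) \<le>
   (\<Sum>t<TT. ind (zc m \<omega> t = N) * V m t \<omega> * (if \<omega> (Suc t, m) then 0 else 1)) + V m TT \<omega>"
proof -
  have "(\<Sum>t<TT. ind (zc m \<omega> (Suc t) = N) * V m (Suc t) \<omega>) \<le>
     (\<Sum>t<TT. ind (zc m \<omega> t = N) * V m t \<omega> * (if \<omega> (Suc t, m) then 0 else 1)
       + (ind (zc m \<omega> t < N) - ind (zc m \<omega> (Suc t) < N)) * V m TT \<omega>)"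
    by (intro sum_mono pathPalmM_term) simp
  also have "\<dots> = (\<Sum>t<TT. ind (zc m \<omega> t = N) * V m t \<omega> * (if \<omega> (Suc t, m) then 0 else 1))
       + (\<Sum>t<TT. ind (zc m \<omega> t < N) - ind (zc m \<omega> (Suc t) < N)) * V m TT \<omega>"
    by (simp add: sum.distrib sum_distrib_right)
  also have "(\<Sum>t<TT. ind (zc m \<omega> t < N) - ind (zc m \<omega> (Suc t) < N)) = ind (zc m \<omega> 0 < N) - ind (zc m \<omega> TT < N)"
    by (rule sum_lessThan_telescope')
  also have "(ind (zc m \<omega> 0 < N) - ind (zc m \<omega> TT < N)) * V m TT \<omega> \<le> V m TT \<omega>"
    using V_nonneg[of m TT \<omega>] by (simp add: ind_def mult_le_cancel_right1)
  finally show ?thesis by simp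
qed

lemma hN_shift: "hN k N (Suc TT) = (\<integral>\<omega>. ind (zc m \<omega> 0 = N) * V k 0 \<omega> \<partial>Ms) +
    (\<Sum>t<TT. \<integral>\<omega>. ind (zc m \<omega> (Suc t) = N) * V k (Suc t) \<omega> \<partial>Ms)"
  unfolding hN_def by (rule sum.lessThan_Suc_shift)

lemma PalmM: "hN m N TT \<le> (1 + Bm) / A"
proof -
  define g0 where "g0 = (\<lambda>b. if b then 0 else (1::real))"
  have dl0: "dep (Jt l t) (\<lambda>\<omega>. ind (zc m \<omega> t = N) * V m t \<omega>)" for t by (rule dep_iV[OF m_le])
  have iL: "integrable Ms (\<lambda>\<omega>. ind (zc m \<omega> (Suc t) = N) * V m (Suc t) \<omega>)" for t
    by (rule int_dep[OF dl0])
  have iR: "integrable Ms (\<lambda>\<omega>. ind (zc m \<omega> t = N) * V m t \<omega> * g0 (\<omega> (Suc t, m)))" for t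
    by (rule int_1[OF dl0 m_le])
  have "(\<Sum>t<TT. \<integral>\<omega>. ind (zc m \<omega> (Suc t) = N) * V m (Suc t) \<omega> \<partial>Ms)
      = (\<integral>\<omega>. (\<Sum>t<TT. ind (zc m \<omega> (Suc t) = N) * V m (Suc t) \<omega>) \<partial>Ms)"
    using iL by (simp add: Bochner_Integration.integral_sum)
  also have "\<dots> \<le> (\<integral>\<omega>. (\<Sum>t<TT. ind (zc m \<omega> t = N) * V m t \<omega> * g0 (\<omega> (Suc t, m))) + V m TT \<omega> \<partial>Ms)"
  proof (rule integral_mono)
    show "integrable Ms (\<lambda>\<omega>. \<Sum>t<TT. ind (zc m \<omega> (Suc t) = N) * V m (Suc t) \<omega>)"
      using iL by simp
    show "integrable Ms (\<lambda>\<omega>. (\<Sum>t<TT. ind (zc m \<omega> t = N) * V m t \<omega> * g0 (\<omega> (Suc t, m))) + V m TT \<omega>)"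
      using iR int_V[OF m_le] by simp
    fix \<omega> show "(\<Sum>t<TT. ind (zc m \<omega> (Suc t) = N) * V m (Suc t) \<omega>) \<le>
        (\<Sum>t<TT. ind (zc m \<omega> t = N) * V m t \<omega> * g0 (\<omega> (Suc t, m))) + V m TT \<omega>"
      using pathPalmM[where TT=TT and \<omega>=\<omega> and N=N] by (simp add: g0_def)
  qed
  also have "\<dots> = (\<Sum>t<TT. \<integral>\<omega>. ind (zc m \<omega> t = N) * V m t \<omega> * g0 (\<omega> (Suc t, m)) \<partial>Ms) + e m TT"
    using iR int_V[OF m_le] by (simp add: Bochner_Integration.integral_sum e_def)
  also have "(\<Sum>t<TT. \<integral>\<omega>. ind (zc m \<omega> t = N) * V m t \<omega> * g0 (\<omega> (Suc t, m)) \<partial>Ms) = (1 - A) * hN m N TT"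
    unfolding hN_def sum_distrib_left
  proof (intro sum.cong refl)
    fix t show "(\<integral>\<omega>. ind (zc m \<omega> t = N) * V m t \<omega> * g0 (\<omega> (Suc t, m)) \<partial>Ms) =
        (1 - A) * (\<integral>\<omega>. ind (zc m \<omega> t = N) * V m t \<omega> \<partial>Ms)"
      by (subst exp_1[OF dl0, where ga=g0]) (simp add: g0_def)
  qed
  finally have a: "(\<Sum>t<TT. \<integral>\<omega>. ind (zc m \<omega> (Suc t) = N) * V m (Suc t) \<omega> \<partial>Ms) \<le> (1 - A) * hN m N TT + e m TT" .
  have "hN m N TT \<le> hN m N (Suc TT)" by (rule hN_mono)
  also have "\<dots> \<le> 1 + ((1 - A) * hN m N TT + e m TT)"
    unfolding hN_shift using a hN_first[of m N] m_ge by linarith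
  finally have "hN m N TT \<le> 1 + (1 - A) * hN m N TT + Bm" using em[of TT] by linarith
  then have "A * hN m N TT \<le> 1 + Bm" by (simp add: algebra_simps)
  then show ?thesis using A_pos by (simp add: pos_le_divide_eq mult.commute)
qed

lemma hN_step:
  assumes k: "k \<in> {1..l}" "k \<noteq> m"
  shows "hN k N (Suc TT) \<le> 1 + (1 - A) * psi k * hN k N TT + (1 - A) * hN (k - 1) N TT
           + A * y * psi k * gN k N TT + A * y * gN (k - 1) N TT"
proof -
  have "(\<Sum>t<TT. \<integral>\<omega>. ind (zc m \<omega> (Suc t) = N) * V k (Suc t) \<omega> \<partial>Ms) \<le>
     (\<Sum>t<TT. (1 - A) * psi k * (\<integral>\<omega>. ind (zc m \<omega> t = N) * V k t \<omega> \<partial>Ms)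
   + (1 - A) * (\<integral>\<omega>. ind (zc m \<omega> t = N) * V (k - 1) t \<omega> \<partial>Ms)
   + A * y * psi k * (\<integral>\<omega>. ind (zc m \<omega> t + 1 = N) * V k t \<omega> \<partial>Ms)
   + A * y * (\<integral>\<omega>. ind (zc m \<omega> t + 1 = N) * V (k - 1) t \<omega> \<partial>Ms))"
    by (intro sum_mono PalmU[OF k])
  also have "\<dots> = (1 - A) * psi k * hN k N TT + (1 - A) * hN (k - 1) N TT
           + A * y * psi k * gN k N TT + A * y * gN (k - 1) N TT"
    unfolding hN_def gN_def by (simp only: sum.distrib sum_distrib_left)
  finally have a: "(\<Sum>t<TT. \<integral>\<omega>. ind (zc m \<omega> (Suc t) = N) * V k (Suc t) \<omega> \<partial>Ms) \<le>
     (1 - A) * psi k * hN k N TT + (1 - A) * hN (k - 1) N TT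
           + A * y * psi k * gN k N TT + A * y * gN (k - 1) N TT" .
  show ?thesis unfolding hN_shift using a hN_first[of k N] k by simp
qed

primrec Hd :: "nat \<Rightarrow> real" where
  "Hd 0 = (1 + Bm) / A"
| "Hd (Suc j) = (1 + cy * Hd j) / (1 - Phi)"

lemma Hd_nonneg: "0 \<le> Hd j"
proof (induction j)
  case 0 then show ?case using Bm_ge1 A_pos by simp
next
  case (Suc j)
  have "0 \<le> 1 + cy * Hd j" using Suc cy_pos by simp
  then show ?case using Phi_lt1 by simp
qed

lemma PalmDown: "m + j \<le> l \<Longrightarrow> hN (m + j) N TT \<le> Hd j"
proof (induction j arbitrary: N TT)
  case 0 then show ?case using PalmM by simp
next
  case (Suc j)
  define k where "k = m + Suc j"
  have k: "k \<in> {1..l}" "k \<noteq> m" using Suc.prems m_ge by (auto simp: k_def)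
  have km: "k - 1 = m + j" by (simp add: k_def)
  have IHj: "hN (m + j) N' TT' \<le> Hd j" for N' TT' using Suc by simp
  define H where "H = Hd (Suc j)"
  have H0: "0 \<le> H" unfolding H_def by (rule Hd_nonneg)
  have HPhi: "H * (1 - Phi) = 1 + cy * Hd j" using Phi_lt1 by (simp add: H_def)
  have psi0: "0 \<le> psi k" "psi k \<le> 1" using psi_nonneg[OF k(1)] psi_le1[OF k(1)] by auto
  have cpsi: "cy * psi k \<le> Phi" by (rule cy_psi[OF k])
  show ?case unfolding k_def[symmetric] H_def[symmetric]
  proof (induction N arbitrary: TT rule: less_induct)
    fix N TT
    assume IHN: "\<And>N' TT. N' < N \<Longrightarrow> hN k N' TT \<le> H"
    have gk: "gN k N TT \<le> H"
    proof (cases N)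
      case 0 then show ?thesis using H0 by (simp add: gN_0)
    next
      case (Suc N') then show ?thesis using IHN[of N'] by (simp add: gN_Suc)
    qed
    have gk1: "gN (k - 1) N TT \<le> Hd j"
    proof (cases N)
      case 0 then show ?thesis using Hd_nonneg[of j] by (simp add: gN_0)
    next
      case (Suc N') then show ?thesis using IHj[of N'] km by (simp add: gN_Suc)
    qed
    have hk1: "hN (k - 1) N TT \<le> Hd j" using IHj km by simp
    define h where "h = hN k N TT"
    have "h \<le> hN k N (Suc TT)" unfolding h_def by (rule hN_mono)
    also have "\<dots> \<le> 1 + (1 - A) * psi k * hN k N TT + (1 - A) * hN (k - 1) N TT
           + A * y * psi k * gN k N TT + A * y * gN (k - 1) N TT" by (rule hN_step[OF k])
    finally have s0: "h \<le> 1 + (1 - A) * psi k * h + (1 - A) * hN (k - 1) N TT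
           + A * y * psi k * gN k N TT + A * y * gN (k - 1) N TT" by (simp add: h_def)
    have c1: "(1 - A) * hN (k - 1) N TT \<le> (1 - A) * Hd j" using hk1 A_le by (intro mult_left_mono) auto
    have c2: "A * y * psi k * gN k N TT \<le> A * y * psi k * H"
      using gk A_pos y_gt1 psi0 by (intro mult_left_mono) auto
    have c3: "A * y * gN (k - 1) N TT \<le> A * y * Hd j" using gk1 A_pos y_gt1 by (intro mult_left_mono) auto
    have e1: "(1 - A) * Hd j + A * y * Hd j = cy * Hd j" unfolding cy_eq by (simp add: algebra_simps)
    have s1: "h - (1 - A) * psi k * h \<le> 1 + cy * Hd j + A * y * psi k * H"
      using s0 c1 c2 c3 e1 by linarith
    have s2: "cy * psi k * H \<le> Phi * H" using cpsi H0 by (rule mult_right_mono)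
    have s3: "1 + cy * Hd j + A * y * psi k * H \<le> H - (1 - A) * psi k * H"
    proof -
      have "1 + cy * Hd j = H - Phi * H" using HPhi by (simp add: algebra_simps)
      moreover have "cy * psi k * H = (1 - A) * psi k * H + A * y * psi k * H" unfolding cy_eq by (simp add: algebra_simps)
      ultimately show ?thesis using s2 by linarith
    qed
    have cpos: "0 < 1 - (1 - A) * psi k"
    proof -
      have "(1 - A) * psi k \<le> (1 - A) * 1" using psi0 A_le by (intro mult_left_mono) auto
      then show ?thesis using A_pos by simp
    qed
    have f1: "h * (1 - (1 - A) * psi k) = h - (1 - A) * psi k * h" by (simp add: algebra_simps)
    have f2: "H * (1 - (1 - A) * psi k) = H - (1 - A) * psi k * H" by (simp add: algebra_simps)
    have "h * (1 - (1 - A) * psi k) \<le> H * (1 - (1 - A) * psi k)"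
      using s1 s3 f1 f2 by linarith
    then show "hN k N TT \<le> H" using cpos unfolding h_def by (rule mult_right_le_imp_le)
  qed
qed

definition "qz n t = (\<integral>\<omega>. ind (zc m \<omega> t < n) \<partial>Ms)"
definition "ar n t = (\<integral>\<omega>. ind (rk \<infinity> (curry \<omega>) t l < n) \<partial>Ms)"

lemma dep_qz: "dep (Jt l t) (\<lambda>\<omega>. ind (zc m \<omega> t < n))"
  by (rule dep_zc_real)

lemma dep_ar: "dep (Jt l t) (\<lambda>\<omega>. ind (rk \<infinity> (curry \<omega>) t l < n))"
  using dep_rk[of l l m t "\<lambda>a b. ind (b < n)" \<infinity>] m_le by simp

lemma qz_nonneg: "0 \<le> qz n t" unfolding qz_def by (rule integral_nonneg_AE) simp

lemma Emin: "(\<integral>\<omega>. real (min (zc m \<omega> (Suc t)) n) \<partial>Ms) = (\<integral>\<omega>. real (min (zc m \<omega> t) n) \<partial>Ms) + A * qz n t"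
proof -
  define g where "g = (\<lambda>b. if b then 1 else (0::real))"
  have i1: "integrable Ms (\<lambda>\<omega>. real (min (zc m \<omega> t) n))" by (rule int_dep[OF dep_zc_real])
  have i2: "integrable Ms (\<lambda>\<omega>. ind (zc m \<omega> t < n) * g (\<omega> (Suc t, m)))" by (rule int_1[OF dep_qz m_le])
  have "(\<integral>\<omega>. real (min (zc m \<omega> (Suc t)) n) \<partial>Ms) =
        (\<integral>\<omega>. real (min (zc m \<omega> t) n) + ind (zc m \<omega> t < n) * g (\<omega> (Suc t, m)) \<partial>Ms)"
    by (rule Bochner_Integration.integral_cong) (auto simp: g_def ind_def)
  also have "\<dots> = (\<integral>\<omega>. real (min (zc m \<omega> t) n) \<partial>Ms) + (\<integral>\<omega>. ind (zc m \<omega> t < n) * g (\<omega> (Suc t, m)) \<partial>Ms)"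
    using i1 i2 by (rule Bochner_Integration.integral_add)
  also have "(\<integral>\<omega>. ind (zc m \<omega> t < n) * g (\<omega> (Suc t, m)) \<partial>Ms) = A * qz n t"
    by (subst exp_1[OF dep_qz, where ga=g]) (simp add: g_def qz_def)
  finally show ?thesis .
qed

lemma sum_qz: "A * (\<Sum>t<TT. qz n t) = (\<integral>\<omega>. real (min (zc m \<omega> TT) n) \<partial>Ms)"
proof (induction TT)
  case 0 then show ?case by simp
next
  case (Suc TT) then show ?case by (simp del: zc.simps add: Emin[of TT n] algebra_simps)
qed

lemma sum_qz_le: "(\<Sum>t<TT. qz n t) \<le> real n / A"
proof -
  interpret prob_space Ms by (rule prob_space_E)
  have "(\<integral>\<omega>. real (min (zc m \<omega> TT) n) \<partial>Ms) \<le> (\<integral>\<omega>. real n \<partial>Ms)"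
    by (rule integral_mono) (auto intro: int_dep[OF dep_zc_real])
  also have "\<dots> = real n" using prob_space by simp
  finally have "A * (\<Sum>t<TT. qz n t) \<le> real n" using sum_qz by simp
  then show ?thesis using A_pos by (simp add: pos_le_divide_eq mult.commute)
qed

lemma qz_anti: "t \<le> t' \<Longrightarrow> qz n t' \<le> qz n t"
  unfolding qz_def
proof (rule integral_mono)
  fix \<omega> assume "t \<le> t'"
  then have "zc m \<omega> t \<le> zc m \<omega> t'" by (rule zc_mono)
  then show "ind (zc m \<omega> t' < n) \<le> ind (zc m \<omega> t < n)" by (simp add: ind_def)
qed (rule int_dep[OF dep_qz])+

lemma ar_ge: "qz n t \<le> ar n t"
  unfolding qz_def ar_def
proof (rule integral_mono)
  fix \<omega>
  have "rk \<infinity> (curry \<omega>) t l \<le> zc m \<omega> t" by (rule rho_le_zc)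
  then show "ind (zc m \<omega> t < n) \<le> ind (rk \<infinity> (curry \<omega>) t l < n)" by (simp add: ind_def)
qed (rule int_dep[OF dep_qz], rule int_dep[OF dep_ar])

lemma lower:
  assumes n: "1 \<le> n"
  shows "real n / A - 1 / A ^ 2 \<le> (\<Sum>t<n * n. ar n t)"
proof -
  interpret prob_space Ms by (rule prob_space_E)
  define TT where "TT = n * n"
  have "real n - real n * qz n TT \<le> (\<integral>\<omega>. real (min (zc m \<omega> TT) n) \<partial>Ms)"
  proof -
    have "(\<integral>\<omega>. real n - real n * ind (zc m \<omega> TT < n) \<partial>Ms) \<le> (\<integral>\<omega>. real (min (zc m \<omega> TT) n) \<partial>Ms)"
      by (rule integral_mono) (auto intro!: int_dep[OF dep_zc_real] int_dep[OF dep_qz] simp: ind_def)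
    moreover have "(\<integral>\<omega>. real n - real n * ind (zc m \<omega> TT < n) \<partial>Ms) = real n - real n * qz n TT"
      using int_dep[OF dep_qz, of TT n] prob_space by (simp add: qz_def)
    ultimately show ?thesis by simp
  qed
  also have "\<dots> = A * (\<Sum>t<TT. qz n t)" by (rule sum_qz[symmetric])
  finally have a: "real n - real n * qz n TT \<le> A * (\<Sum>t<TT. qz n t)" .
  have "real (Suc TT) * qz n TT = (\<Sum>t<Suc TT. qz n TT)" by simp
  also have "\<dots> \<le> (\<Sum>t<Suc TT. qz n t)" by (intro sum_mono qz_anti) simp
  also have "\<dots> \<le> real n / A" by (rule sum_qz_le)
  finally have b: "real (Suc TT) * qz n TT \<le> real n / A" .
  have c: "real n * qz n TT \<le> 1 / A"
  proof -
    have "real n * (real (Suc TT) * qz n TT) \<le> real n * (real n / A)"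
      using b by (rule mult_left_mono) simp
    also have "\<dots> = real (n * n) / A" by simp
    also have "\<dots> \<le> real (Suc TT) * (1 / A)" using A_pos by (simp add: TT_def divide_right_mono)
    finally have "real (Suc TT) * (real n * qz n TT) \<le> real (Suc TT) * (1 / A)" by (simp add: algebra_simps)
    then show ?thesis by (rule mult_left_le_imp_le) simp
  qed
  have "real n - 1 / A \<le> A * (\<Sum>t<TT. qz n t)" using a c by linarith
  then have "(real n - 1 / A) / A \<le> (\<Sum>t<TT. qz n t)" using A_pos by (simp add: divide_le_eq mult.commute)
  also have "\<dots> \<le> (\<Sum>t<TT. ar n t)" by (intro sum_mono ar_ge)
  finally show ?thesis using A_pos by (simp add: TT_def diff_divide_distrib power2_eq_square)
qed

lemma path_upper:
  assumes "t < TT"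
  shows "ind (rk \<infinity> (curry \<omega>) t l < n) \<le> ind (zc m \<omega> t < n) +
           (\<Sum>j<TT. ind (zc m \<omega> t = n + j) * V l t \<omega> * u ^ Suc j)"
proof -
  have nn: "0 \<le> (\<Sum>j<TT. ind (zc m \<omega> t = n + j) * V l t \<omega> * u ^ Suc j)"
    using V_nonneg u_pos by (intro sum_nonneg) simp
  show ?thesis
  proof (cases "rk \<infinity> (curry \<omega>) t l < n")
    case False then show ?thesis using nn by simp
  next
    case rl: True
    show ?thesis
    proof (cases "zc m \<omega> t < n")
      case True then show ?thesis using nn by simp
    next
      case False
      define j0 where "j0 = zc m \<omega> t - n"
      have j0: "zc m \<omega> t = n + j0" using False by (simp add: j0_def)
      have j0T: "j0 \<in> {..<TT}" using zc_le[of m \<omega> t] assms by (simp add: j0_def)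
      have ge: "Suc j0 \<le> zc m \<omega> t - rk \<infinity> (curry \<omega>) t l" using rl j0 by simp
      have "y ^ Suc j0 * u ^ Suc j0 = (y * u) ^ Suc j0" by (rule power_mult_distrib[symmetric])
      then have "1 = y ^ Suc j0 * u ^ Suc j0" by (simp add: yu)
      also have "\<dots> \<le> V l t \<omega> * u ^ Suc j0"
        unfolding V_l_eq using ge y_gt1 u_pos by (intro mult_right_mono power_increasing) auto
      also have "\<dots> = ind (zc m \<omega> t = n + j0) * V l t \<omega> * u ^ Suc j0" using j0 by simp
      also have "\<dots> \<le> (\<Sum>j<TT. ind (zc m \<omega> t = n + j) * V l t \<omega> * u ^ Suc j)"
        by (rule member_le_sum[OF j0T]) (use V_nonneg u_pos in simp_all)
      finally have s: "1 \<le> (\<Sum>j<TT. ind (zc m \<omega> t = n + j) * V l t \<omega> * u ^ Suc j)" .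
      have "ind (rk \<infinity> (curry \<omega>) t l < n) = 1" using rl by simp
      then show ?thesis using s ind_nonneg[of "zc m \<omega> t < n"] by linarith
    qed
  qed
qed

lemma upper: "(\<Sum>t<TT. ar n t) \<le> real n / A + Hd (l - m) / dl"
proof -
  define H where "H = Hd (l - m)"
  have dj: "dep (Jt l t) (\<lambda>\<omega>. ind (zc m \<omega> t = n + j) * V l t \<omega>)" for t j
    by (rule dep_iV) simp
  have ij: "integrable Ms (\<lambda>\<omega>. ind (zc m \<omega> t = n + j) * V l t \<omega> * u ^ Suc j)" for t j
    using int_dep[OF dj[of t j]] by simp
  have step: "ar n t \<le> qz n t + (\<Sum>j<TT. u ^ Suc j * (\<integral>\<omega>. ind (zc m \<omega> t = n + j) * V l t \<omega> \<partial>Ms))"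
    if "t < TT" for t
  proof -
    have "ar n t \<le> (\<integral>\<omega>. ind (zc m \<omega> t < n) + (\<Sum>j<TT. ind (zc m \<omega> t = n + j) * V l t \<omega> * u ^ Suc j) \<partial>Ms)"
      unfolding ar_def
    proof (rule integral_mono)
      show "integrable Ms (\<lambda>\<omega>. ind (zc m \<omega> t < n) + (\<Sum>j<TT. ind (zc m \<omega> t = n + j) * V l t \<omega> * u ^ Suc j))"
        using int_dep[OF dep_qz] ij by simp
    qed (rule int_dep[OF dep_ar], rule path_upper[OF that])
    also have "\<dots> = qz n t + (\<Sum>j<TT. u ^ Suc j * (\<integral>\<omega>. ind (zc m \<omega> t = n + j) * V l t \<omega> \<partial>Ms))"
      using int_dep[OF dep_qz] ij by (simp add: qz_def Bochner_Integration.integral_sum mult.commute)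
    finally show ?thesis .
  qed
  have "(\<Sum>t<TT. ar n t) \<le> (\<Sum>t<TT. qz n t + (\<Sum>j<TT. u ^ Suc j * (\<integral>\<omega>. ind (zc m \<omega> t = n + j) * V l t \<omega> \<partial>Ms)))"
    by (intro sum_mono step) simp
  also have "\<dots> = (\<Sum>t<TT. qz n t) + (\<Sum>t<TT. \<Sum>j<TT. u ^ Suc j * (\<integral>\<omega>. ind (zc m \<omega> t = n + j) * V l t \<omega> \<partial>Ms))"
    by (rule sum.distrib)
  also have "(\<Sum>t<TT. \<Sum>j<TT. u ^ Suc j * (\<integral>\<omega>. ind (zc m \<omega> t = n + j) * V l t \<omega> \<partial>Ms))
     = (\<Sum>j<TT. \<Sum>t<TT. u ^ Suc j * (\<integral>\<omega>. ind (zc m \<omega> t = n + j) * V l t \<omega> \<partial>Ms))"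
    by (rule sum.swap)
  also have "\<dots> = (\<Sum>j<TT. u ^ Suc j * hN l (n + j) TT)"
    unfolding hN_def by (simp only: sum_distrib_left)
  also have "(\<Sum>j<TT. u ^ Suc j * hN l (n + j) TT) \<le> (\<Sum>j<TT. u ^ Suc j * H)"
  proof (intro sum_mono mult_left_mono)
    fix j show "hN l (n + j) TT \<le> H" using PalmDown[of "l - m" "n + j" TT] m_le by (simp add: H_def)
  qed (use u_pos in simp)
  also have "(\<Sum>j<TT. u ^ Suc j * H) = u * H * (\<Sum>j<TT. u ^ j)"
    by (simp add: sum_distrib_left algebra_simps)
  also have "\<dots> \<le> u * H * (1 / (1 - u))"
  proof (rule mult_left_mono)
    have "(\<Sum>j<TT. u ^ j) = (1 - u ^ TT) / (1 - u)" using u_lt1 by (simp add: sum_gp_strict)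
    also have "\<dots> \<le> 1 / (1 - u)" using u_lt1 u_pos by (intro divide_right_mono) auto
    finally show "(\<Sum>j<TT. u ^ j) \<le> 1 / (1 - u)" .
    show "0 \<le> u * H" using u_pos Hd_nonneg by (simp add: H_def)
  qed
  also have "u * H * (1 / (1 - u)) = H / dl"
  proof -
    have "1 - u = dl / (1 + dl)" using dl_pos by (simp add: u_def field_simps)
    then have "u * H * (1 / (1 - u)) = (1 / (1 + dl)) * H * ((1 + dl) / dl)" by (simp add: u_def)
    also have "\<dots> = H / dl"
    proof -
      have "0 < dl * dl" using dl_pos by simp
      then have ne: "dl + dl * dl \<noteq> 0" "1 + dl \<noteq> 0" using dl_pos by linarith+
      then show ?thesis using dl_pos by (simp add: field_simps)
    qed
    finally show ?thesis .
  qed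
  finally show ?thesis using sum_qz_le[where TT=TT and n=n] by (simp add: H_def)
qed

lemma sum_one_top: "(\<Sum>t. ennreal 1) = \<top>"
proof (rule ccontr)
  assume "(\<Sum>t. ennreal 1) \<noteq> \<top>"
  then have "summable (\<lambda>t::nat. 1::real)" by (intro summable_suminf_not_top) auto
  then have "(\<lambda>t::nat. 1::real) \<longlonglongrightarrow> 0" by (rule summable_LIMSEQ_zero)
  then show False using LIMSEQ_const_iff[of "1::real" 0] by simp
qed

lemma T_sum: "T l n \<omega> = (\<Sum>t. ennreal (ind (rk \<infinity> (curry \<omega>) t l < n)))"
proof -
  have Rn: "R l (enat n) t \<omega> = min n (rk \<infinity> (curry \<omega>) t l)" for t
    by (simp add: R_def rk_min)
  show ?thesis
  proof (cases "\<exists>t. R l (enat n) t \<omega> = n")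
    case True
    define t0 where "t0 = (LEAST t. R l (enat n) t \<omega> = n)"
    have t0: "R l (enat n) t0 \<omega> = n" using True unfolding t0_def by (rule LeastI_ex)
    have lt: "rk \<infinity> (curry \<omega>) t l < n \<longleftrightarrow> t < t0" for t
    proof
      assume "rk \<infinity> (curry \<omega>) t l < n"
      then have "R l (enat n) t \<omega> \<noteq> n" using Rn[of t] by simp
      show "t < t0"
      proof (rule ccontr)
        assume "\<not> t < t0"
        then have "rk \<infinity> (curry \<omega>) t0 l \<le> rk \<infinity> (curry \<omega>) t l" by (intro rk_time_mono) simp
        moreover have "n \<le> rk \<infinity> (curry \<omega>) t0 l" using t0 Rn[of t0] by simp
        ultimately show False using \<open>rk \<infinity> (curry \<omega>) t l < n\<close> by simp
      qed
    next
      assume "t < t0"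
      then have "R l (enat n) t \<omega> \<noteq> n" unfolding t0_def by (rule not_less_Least)
      then show "rk \<infinity> (curry \<omega>) t l < n" using Rn[of t] by (simp add: min_def split: if_splits)
    qed
    have "(\<Sum>t. ennreal (ind (rk \<infinity> (curry \<omega>) t l < n))) = (\<Sum>t\<in>{..<t0}. ennreal (ind (rk \<infinity> (curry \<omega>) t l < n)))"
      by (rule suminf_finite) (auto simp: lt)
    also have "\<dots> = (\<Sum>t\<in>{..<t0}. 1)" by (intro sum.cong refl) (simp add: lt)
    also have "\<dots> = ennreal (real t0)" by (simp add: ennreal_of_nat_eq_real_of_nat)
    finally show ?thesis using True by (simp add: T_def t0_def)
  next
    case False
    then have "rk \<infinity> (curry \<omega>) t l < n" for t using Rn[of t] by (auto simp: min_def split: if_splits)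
    then have "(\<Sum>t. ennreal (ind (rk \<infinity> (curry \<omega>) t l < n))) = \<top>" using sum_one_top by simp
    then show ?thesis using False by (simp add: T_def)
  qed
qed

lemma ET: "(\<integral>\<^sup>+\<omega>. T l n \<omega> \<partial>Ms) = (\<Sum>t. ennreal (ar n t))"
proof -
  have "(\<integral>\<^sup>+\<omega>. T l n \<omega> \<partial>Ms) = (\<integral>\<^sup>+\<omega>. (\<Sum>t. ennreal (ind (rk \<infinity> (curry \<omega>) t l < n))) \<partial>Ms)"
    by (simp add: T_sum)
  also have "\<dots> = (\<Sum>t. \<integral>\<^sup>+\<omega>. ennreal (ind (rk \<infinity> (curry \<omega>) t l < n)) \<partial>Ms)"
  proof (rule nn_integral_suminf)
    fix t show "(\<lambda>\<omega>. ennreal (ind (rk \<infinity> (curry \<omega>) t l < n))) \<in> borel_measurable Ms"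
      using measurable_compose[OF dep_measurable[OF finite_Jt dep_ar] measurable_ennreal] by simp
  qed
  also have "\<dots> = (\<Sum>t. ennreal (ar n t))"
    unfolding ar_def by (intro suminf_cong nn_integral_eq_integral int_dep[OF dep_ar]) simp
  finally show ?thesis .
qed

lemma part2:
  assumes n: "1 \<le> n"
  shows "(\<integral>\<^sup>+\<omega>. T l n \<omega> \<partial>Ms) \<noteq> \<infinity> \<and>
     \<bar>enn2real (\<integral>\<^sup>+\<omega>. T l n \<omega> \<partial>Ms) - real n / A\<bar> \<le> Hd (l - m) / dl + 1 / A ^ 2"
proof -
  have nn: "0 \<le> ar n t" for t unfolding ar_def by (rule integral_nonneg_AE) simp
  have sm: "summable (ar n)" using nn upper by (rule summableI_nonneg_bounded)
  have eq: "(\<integral>\<^sup>+\<omega>. T l n \<omega> \<partial>Ms) = ennreal (\<Sum>t. ar n t)"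
    unfolding ET using nn sm by (rule suminf_ennreal2)
  have up: "(\<Sum>t. ar n t) \<le> real n / A + Hd (l - m) / dl" using sm upper by (rule suminf_le_const)
  have lo: "real n / A - 1 / A ^ 2 \<le> (\<Sum>t. ar n t)"
  proof -
    have "(\<Sum>t<n * n. ar n t) \<le> (\<Sum>t. ar n t)" using sm by (rule sum_le_suminf) (auto simp: nn)
    then show ?thesis using lower[OF n] by linarith
  qed
  have s0: "0 \<le> (\<Sum>t. ar n t)" using sm nn by (simp add: suminf_nonneg)
  have hd: "0 \<le> Hd (l - m) / dl" using Hd_nonneg dl_pos by simp
  have a2: "0 \<le> 1 / A ^ 2" by simp
  have e2: "enn2real (\<integral>\<^sup>+\<omega>. T l n \<omega> \<partial>Ms) = (\<Sum>t. ar n t)" using eq s0 by simp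
  have "\<bar>(\<Sum>t. ar n t) - real n / A\<bar> \<le> Hd (l - m) / dl + 1 / A ^ 2"
    using up lo hd a2 by (intro abs_leI) linarith+
  then show ?thesis using e2 eq by simp
qed

end

theorem mainTheorem8:
  fixes l :: nat and p :: "nat \<Rightarrow> real" and m :: nat
  assumes "l \<ge> 1"
    and "\<forall>i\<in>{1..l}. 0 \<le> p i \<and> p i < 1"
    and "m \<in> {1..l}"
    and "\<forall>i\<in>{1..l}. i \<noteq> m \<longrightarrow> p i < p m"
  shows "(\<exists>C. \<forall>t::nat.
            \<bar>(1 - p m) * real t
              - (\<integral>\<omega>. real (R l \<infinity> t \<omega>) \<partial>erasure_space p)\<bar> \<le> C)
       \<and> (\<exists>C. \<forall>n::nat. n \<ge> 1 \<longrightarrow>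
            (\<integral>\<^sup>+\<omega>. T l n \<omega> \<partial>erasure_space p) \<noteq> \<infinity> \<and>
            \<bar>enn2real (\<integral>\<^sup>+\<omega>. T l n \<omega> \<partial>erasure_space p) - real n / (1 - p m)\<bar> \<le> C)"
proof -
  interpret LN l p m using assms by unfold_locales
  have c1: "\<forall>t::nat. \<bar>(1 - p m) * real t - (\<integral>\<omega>. real (R l \<infinity> t \<omega>) \<partial>erasure_space p)\<bar> \<le> Bd (l - m) / dl"
    using part1 by (simp add: A_def)
  have c2: "\<forall>n::nat. n \<ge> 1 \<longrightarrow>
            (\<integral>\<^sup>+\<omega>. T l n \<omega> \<partial>erasure_space p) \<noteq> \<infinity> \<and>
            \<bar>enn2real (\<integral>\<^sup>+\<omega>. T l n \<omega> \<partial>erasure_space p) - real n / (1 - p m)\<bar> \<le> Hd (l - m) / dl + 1 / A ^ 2"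
    using part2 by (simp add: A_def)
  show ?thesis using c1 c2 by blast
qed

end
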